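(* For all $\tilde\alpha\ge0$, $-1<\tilde\beta\le0$ and $e\in[0,1)$, $$\phi_{-1}(\tilde{\mathcal A}(\tilde\alpha,\tilde\beta,e))\le2,\qquad \nu_{-1}(\tilde{\mathcal A}(\tilde\alpha,\tilde\beta,e))\le2.$$ Moreover, for given $e_0\in[0,1)$, if $\tilde\alpha>\frac14+\frac54e_0$ and $-1<\tilde\beta\le0$, then $\phi_{-1}(\tilde{\mathcal A}(\tilde\alpha,\tilde\beta,e_0))=0$ and $\nu_{-1}(\tilde{\mathcal A}(\tilde\alpha,\tilde\beta,e_0))=0$.
   Context: $R(t)$ is the rotation matrix by angle $t$. For $\alpha,\beta\in\mathbf R$, $e\in[0,1)$, $\mathcal A(\alpha,\beta,e)=-\frac{d^2}{dt^2}I_2-I_2+\frac{1}{1+e\cos t}R(t)\mathrm{diag}(1+\alpha+3\beta,1+\alpha-3\beta)R(t)^T$, self-adjoint on $L^2([0,2\pi],\mathbf C^2)$ with domain $\{y\in W^{2,2}([0,2\pi],\mathbf C^2):y(2\pi)=-y(0),y'(2\pi)=-y'(0)\}$ (the case $\omega=-1$); $\phi_{-1}$ is its Morse index (total multiplicity of negative eigenvalues) and $\nu_{-1}=\dim\ker$. $\tilde\alpha=\alpha-\beta$, $\tilde\beta=-\alpha+3\beta-1$, $\tilde{\mathcal A}(\tilde\alpha,\tilde\beta,e):=\mathcal A(\alpha,\beta,e)$. *)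

theory Defs
  imports "HOL-Analysis.Analysis" "HOL-Library.Extended_Nat"
begin

text \<open>Functions y : [0,2pi] -> C^2 are represented as y :: real => complex * complex,
  normalised to vanish outside [0,2pi].\<close>

text \<open>Potential term (1/(1+e cos t)) R(t) diag(1+a+3b, 1+a-3b) R(t)^T applied to v.\<close>
definition pot :: "real \<Rightarrow> real \<Rightarrow> real \<Rightarrow> real \<Rightarrow> complex \<times> complex \<Rightarrow> complex \<times> complex" where
  "pot \<alpha> \<beta> e t v =
     (let a = 1 + \<alpha> + 3 * \<beta>; b = 1 + \<alpha> - 3 * \<beta>; c = cos t; s = sin t;
          k = 1 / (1 + e * c)
      in (complex_of_real (k * (a * c^2 + b * s^2)) * fst v
            + complex_of_real (k * (a - b) * c * s) * snd v,
          complex_of_real (k * (a - b) * c * s) * fst v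
            + complex_of_real (k * (a * s^2 + b * c^2)) * snd v))"

text \<open>y lies in the domain of A(alpha,beta,e) (omega = -1 boundary conditions) and
  A y = lam y.\<close>
definition is_eigfun :: "real \<Rightarrow> real \<Rightarrow> real \<Rightarrow> real \<Rightarrow> (real \<Rightarrow> complex \<times> complex) \<Rightarrow> bool" where
  "is_eigfun \<alpha> \<beta> e lam y \<longleftrightarrow>
     (\<forall>t. t \<notin> {0..2*pi} \<longrightarrow> y t = 0) \<and>
     (\<exists>y' y''.
        (\<forall>t\<in>{0..2*pi}. (y has_vector_derivative y' t) (at t within {0..2*pi}) \<and>
                        (y' has_vector_derivative y'' t) (at t within {0..2*pi})) \<and>
        y (2*pi) = - y 0 \<and> y' (2*pi) = - y' 0 \<and>
        (\<forall>t\<in>{0..2*pi}. - y'' t - y t + pot \<alpha> \<beta> e t (y t) = lam *\<^sub>R y t))"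

definition cindep :: "nat \<Rightarrow> (nat \<Rightarrow> real \<Rightarrow> complex \<times> complex) \<Rightarrow> bool" where
  "cindep n ys \<longleftrightarrow>
     (\<forall>c :: nat \<Rightarrow> complex.
        (\<forall>t. (\<Sum>i<n. c i * fst (ys i t)) = 0 \<and> (\<Sum>i<n. c i * snd (ys i t)) = 0)
        \<longrightarrow> (\<forall>i<n. c i = 0))"

text \<open>Morse index: total multiplicity of negative eigenvalues, i.e. the complex dimension
  of the span of all eigenfunctions with negative eigenvalue.\<close>
definition morse_index :: "real \<Rightarrow> real \<Rightarrow> real \<Rightarrow> enat" where
  "morse_index \<alpha> \<beta> e =
     Sup {enat n | n. \<exists>ys. (\<forall>i<n. \<exists>lam<0. is_eigfun \<alpha> \<beta> e lam (ys i)) \<and> cindep n ys}"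

definition nullity :: "real \<Rightarrow> real \<Rightarrow> real \<Rightarrow> enat" where
  "nullity \<alpha> \<beta> e =
     Sup {enat n | n. \<exists>ys. (\<forall>i<n. is_eigfun \<alpha> \<beta> e 0 (ys i)) \<and> cindep n ys}"

text \<open>Tilde parameters: at = a - b, bt = -a + 3b - 1, i.e.
  a = (3 a_t + b_t + 1)/2, b = (a_t + b_t + 1)/2.\<close>
definition morse_index_t :: "real \<Rightarrow> real \<Rightarrow> real \<Rightarrow> enat" where
  "morse_index_t a_t b_t e = morse_index ((3*a_t + b_t + 1)/2) ((a_t + b_t + 1)/2) e"

definition nullity_t :: "real \<Rightarrow> real \<Rightarrow> real \<Rightarrow> enat" where
  "nullity_t a_t b_t e = nullity ((3*a_t + b_t + 1)/2) ((a_t + b_t + 1)/2) e"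

end

theory Submission
  imports Defs
begin


lemma cont_within_of_deriv:
  fixes f f1 :: "real \<Rightarrow> real"
  assumes "\<And>t. t \<in> S \<Longrightarrow> (f has_real_derivative f1 t) (at t within S)"
  shows "continuous_on S f"
  using assms DERIV_continuous continuous_on_eq_continuous_within by blast

lemma picone_main:
  fixes f f1 \<phi> \<phi>1 \<phi>2 V :: "real \<Rightarrow> real"
  assumes ab: "a \<le> b"
  and phid: "\<And>t. (\<phi> has_real_derivative \<phi>1 t) (at t)"
  and phi1d: "\<And>t. (\<phi>1 has_real_derivative \<phi>2 t) (at t)"
  and phiV: "\<And>t. t \<in> {a..b} \<Longrightarrow> \<phi>2 t = V t * \<phi> t"
  and Vc: "continuous_on {a..b} V"
  and nz: "\<And>t. t \<in> {a<..<b} \<Longrightarrow> \<phi> t \<noteq> 0"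
  and ea: "\<phi> a = 0 \<Longrightarrow> f a = 0 \<and> \<phi>1 a \<noteq> 0"
  and eb: "\<phi> b = 0 \<Longrightarrow> f b = 0 \<and> \<phi>1 b \<noteq> 0"
  and fd: "\<And>t. t \<in> {a..b} \<Longrightarrow> (f has_real_derivative f1 t) (at t within {a..b})"
  and f1c: "continuous_on {a..b} f1"
  shows "((\<lambda>t. (f1 t - \<phi>1 t / \<phi> t * f t)^2) has_integral
           (integral {a..b} (\<lambda>t. (f1 t)^2 + V t * (f t)^2)
             - (\<phi>1 b * (f b / \<phi> b) * f b - \<phi>1 a * (f a / \<phi> a) * f a))) {a..b}"
proof -
  define H where "H = (\<lambda>t. \<phi>1 t * (f t / \<phi> t) * f t)"
  define L where "L = (\<lambda>t. (f1 t)^2 + V t * (f t)^2)"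
  define R where "R = (\<lambda>t. (f1 t - \<phi>1 t / \<phi> t * f t)^2)"
  have fc: "continuous_on {a..b} f" using cont_within_of_deriv[OF fd] .
  have phic: "\<And>t. isCont \<phi> t" using phid DERIV_isCont by blast
  have phi1c: "\<And>t. isCont \<phi>1 t" using phi1d DERIV_isCont by blast
  have fcw: "\<And>t. t \<in> {a..b} \<Longrightarrow> (f \<longlongrightarrow> f t) (at t within {a..b})"
    using fc continuous_on_def by blast
  have Hc: "continuous_on {a..b} H"
    unfolding continuous_on_def
  proof
    fix x assume x: "x \<in> {a..b}"
    show "(H \<longlongrightarrow> H x) (at x within {a..b})"
    proof (cases "\<phi> x = 0")
      case False
      have "((\<lambda>t. \<phi>1 t * (f t / \<phi> t) * f t) \<longlongrightarrow> \<phi>1 x * (f x / \<phi> x) * f x) (at x within {a..b})"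
        by (intro tendsto_intros fcw x False isCont_tendsto_compose[OF phic] isCont_tendsto_compose[OF phi1c]
             tendsto_within_subset[OF tendsto_ident_at] ; simp)
      then show ?thesis unfolding H_def .
    next
      case True
      have xab: "x = a \<or> x = b" using x nz True by force
      have ex: "f x = 0" "\<phi>1 x \<noteq> 0" using xab True ea eb by auto
      have q1: "((\<lambda>t. (f t - f x) / (t - x)) \<longlongrightarrow> f1 x) (at x within {a..b})"
        using fd[OF x] has_field_derivative_iff by blast
      have q2: "((\<lambda>t. (\<phi> t - \<phi> x) / (t - x)) \<longlongrightarrow> \<phi>1 x) (at x within {a..b})"
        using has_field_derivative_at_within[OF phid[of x]] has_field_derivative_iff by blast
      have q3: "((\<lambda>t. ((f t - f x) / (t - x)) / ((\<phi> t - \<phi> x) / (t - x))) \<longlongrightarrow> f1 x / \<phi>1 x) (at x within {a..b})"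
        using tendsto_divide[OF q1 q2 ex(2)] .
      have ev: "\<forall>\<^sub>F t in at x within {a..b}. ((f t - f x) / (t - x)) / ((\<phi> t - \<phi> x) / (t - x)) = f t / \<phi> t"
        unfolding eventually_at_filter using ex True by (auto intro!: always_eventually)
      have q4: "((\<lambda>t. f t / \<phi> t) \<longlongrightarrow> f1 x / \<phi>1 x) (at x within {a..b})"
        using tendsto_cong[OF ev] q3 by blast
      have "((\<lambda>t. \<phi>1 t * (f t / \<phi> t) * f t) \<longlongrightarrow> \<phi>1 x * (f1 x / \<phi>1 x) * f x) (at x within {a..b})"
        by (intro tendsto_intros q4 fcw x isCont_tendsto_compose[OF phi1c]
             tendsto_within_subset[OF tendsto_ident_at]; simp)
      then show ?thesis unfolding H_def using ex True by simp
    qed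
  qed
  have Hd: "(H has_vector_derivative (L t - R t)) (at t)" if t: "t \<in> {a<..<b}" for t
  proof -
    have tin: "t \<in> interior {a..b}" using t by simp
    have ft: "(f has_real_derivative f1 t) (at t)"
      using fd[of t] t at_within_interior[OF tin] by auto
    have pt: "\<phi> t \<noteq> 0" using nz t by auto
    have "(H has_real_derivative (L t - R t)) (at t)"
      unfolding H_def
      apply (rule derivative_eq_intros ft phid phi1d pt refl | simp)+
      unfolding L_def R_def using phiV[of t] t pt
      by (simp add: field_simps power2_eq_square)
    then show ?thesis using has_real_derivative_iff_has_vector_derivative by metis
  qed
  have I1: "((\<lambda>t. L t - R t) has_integral (H b - H a)) {a..b}"
    by (rule fundamental_theorem_of_calculus_interior[OF ab Hc Hd])
  have Lc: "continuous_on {a..b} L"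
    unfolding L_def by (intro continuous_intros f1c Vc fc)
  have I2: "(L has_integral integral {a..b} L) {a..b}"
    using integrable_continuous_real[OF Lc] by (simp add: integrable_integral)
  have "((\<lambda>t. L t - (L t - R t)) has_integral (integral {a..b} L - (H b - H a))) {a..b}"
    using has_integral_diff[OF I2 I1] .
  then show ?thesis unfolding H_def L_def R_def by simp
qed

lemma picone_eq:
  fixes f f1 \<phi> \<phi>1 :: "real \<Rightarrow> real"
  assumes ab: "a < b"
  and phid: "\<And>t. (\<phi> has_real_derivative \<phi>1 t) (at t)"
  and phi1c: "\<And>t. isCont \<phi>1 t"
  and nz: "\<And>t. t \<in> {a<..<b} \<Longrightarrow> \<phi> t \<noteq> 0"
  and ea: "\<phi> a = 0" "f a = 0" and eb: "\<phi> b = 0" "f b = 0"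
  and fd: "\<And>t. t \<in> {a..b} \<Longrightarrow> (f has_real_derivative f1 t) (at t within {a..b})"
  and f1c: "continuous_on {a..b} f1"
  and R0: "((\<lambda>t. (f1 t - \<phi>1 t / \<phi> t * f t)^2) has_integral 0) {a..b}"
  shows "\<exists>c. \<forall>t\<in>{a..b}. f t = c * \<phi> t"
proof -
  define R where "R = (\<lambda>t. (f1 t - \<phi>1 t / \<phi> t * f t)^2)"
  have fc: "continuous_on {a..b} f" using cont_within_of_deriv[OF fd] .
  have phic: "\<And>t. isCont \<phi> t" using phid DERIV_isCont by blast
  have Rz: "R t = 0" if t: "t \<in> {a<..<b}" for t
  proof -
    define d where "d = min (t - a) (b - t) / 2"
    have d: "d > 0" "a < t - d" "t + d < b" using t by (auto simp: d_def min_def field_simps split: if_splits)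
    have sub: "{t-d..t+d} \<subseteq> {a<..<b}" using d by auto
    have sub2: "{t-d..t+d} \<subseteq> {a..b}" using d by auto
    have Rc: "continuous_on {t-d..t+d} R"
      unfolding R_def
      using sub nz
      by (intro continuous_intros continuous_on_subset[OF f1c sub2] continuous_on_subset[OF fc sub2]
            continuous_at_imp_continuous_on ballI phic phi1c) auto
    have Rnn: "\<And>x. 0 \<le> R x" unfolding R_def by simp
    have Rint: "R integrable_on {a..b}" using R0 unfolding R_def by blast
    have Rint2: "R integrable_on {t-d..t+d}" using integrable_continuous_real[OF Rc] .
    have "integral {t-d..t+d} R \<le> integral {a..b} R"
      by (rule integral_subset_le[OF sub2 Rint2 Rint]) (simp add: Rnn)
    also have "\<dots> = 0" using R0 unfolding R_def by (simp add: integral_unique)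
    finally have "integral {t-d..t+d} R = 0"
      using integral_nonneg[OF Rint2] Rnn by (meson order_antisym)
    then have "\<forall>x\<in>{t-d..t+d}. R x = 0"
      using integral_eq_0_iff[OF Rc] d Rnn by auto
    then show ?thesis using d by auto
  qed
  have gd: "((\<lambda>x. f x / \<phi> x) has_real_derivative 0) (at t within {a<..<b})" if t: "t \<in> {a<..<b}" for t
  proof -
    have tin: "t \<in> interior {a..b}" using t by simp
    have ft: "(f has_real_derivative f1 t) (at t)"
      using fd[of t] t at_within_interior[OF tin] by auto
    have pt: "\<phi> t \<noteq> 0" using nz t by auto
    have e: "f1 t = \<phi>1 t / \<phi> t * f t" using Rz[OF t] unfolding R_def by simp
    have "((\<lambda>x. f x / \<phi> x) has_real_derivative 0) (at t)"
      apply (rule derivative_eq_intros ft phid pt refl | simp)+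
      using e pt by (simp add: field_simps)
    then show ?thesis using has_field_derivative_at_within by blast
  qed
  obtain c where c: "\<And>x. x \<in> {a<..<b} \<Longrightarrow> f x / \<phi> x = c"
    using has_field_derivative_zero_constant[of "{a<..<b}" "\<lambda>x. f x / \<phi> x"] gd by auto
  show ?thesis
  proof (intro exI ballI)
    fix t assume t: "t \<in> {a..b}"
    show "f t = c * \<phi> t"
    proof (cases "t \<in> {a<..<b}")
      case True
      then show ?thesis using c[OF True] nz[OF True] by (simp add: field_simps)
    next
      case False
      then have "t = a \<or> t = b" using t by auto
      then show ?thesis using ea eb by auto
    qed
  qed
qed




lemma rot_alg:
  fixes c s x1 x2 d1 d2 :: real
  assumes "s^2 + c^2 = 1"
  shows "d1^2 + d2^2 - x1^2 - x2^2 - ((-s*x1 + c*x2) + (c*d1 + s*d2))^2 - ((c*x1 + s*x2) + (-s*d1 + c*d2))^2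
          + 4 * (c*x1 + s*x2)^2
       = -2 * (((-s*x1 + c*x2) + (c*d1 + s*d2)) * (-s*x1 + c*x2)
              + (c*x1 + s*x2) * (((c*x1 + s*x2) + (-s*d1 + c*d2)) - 2 * (c*x1 + s*x2)))"
  using assms by algebra


lemma deriv_match:
  fixes f p :: "real \<Rightarrow> real"
  assumes ab: "a < b" and x: "x \<in> {a..b}"
  and fd: "(f has_real_derivative D1) (at x within {a..b})"
  and eq: "\<And>t. t \<in> {a..b} \<Longrightarrow> f t = c * p t"
  and pd: "(p has_real_derivative P1) (at x)"
  shows "D1 = c * P1"
proof -
  have g1: "((\<lambda>t. c * p t) has_real_derivative D1) (at x within {a..b})"
    by (rule has_field_derivative_transform_within[OF fd zero_less_one x]) (simp add: eq)
  have g2: "((\<lambda>t. c * p t) has_real_derivative c * P1) (at x within {a..b})"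
    using DERIV_cmult[OF has_field_derivative_at_within[OF pd]] .
  show ?thesis
    using vector_derivative_unique_within_closed_interval[of a b x "\<lambda>t. c * p t" D1 "c * P1"]
      g1 g2 ab x by (simp add: has_real_derivative_iff_has_vector_derivative)
qed

locale core =
  fixes x1 x2 d1 d2 dd1 dd2 :: "real \<Rightarrow> real" and e aa u :: real
  assumes e: "0 \<le> e" "e < 1"
  and atu: "0 \<le> aa" "0 \<le> u" "u < 1"
  and x1d: "\<And>t. t \<in> {0..2*pi} \<Longrightarrow> (x1 has_real_derivative d1 t) (at t within {0..2*pi})"
  and x2d: "\<And>t. t \<in> {0..2*pi} \<Longrightarrow> (x2 has_real_derivative d2 t) (at t within {0..2*pi})"
  and d1d: "\<And>t. t \<in> {0..2*pi} \<Longrightarrow> (d1 has_real_derivative dd1 t) (at t within {0..2*pi})"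
  and d2d: "\<And>t. t \<in> {0..2*pi} \<Longrightarrow> (d2 has_real_derivative dd2 t) (at t within {0..2*pi})"
  and dd1c: "continuous_on {0..2*pi} dd1"
  and dd2c: "continuous_on {0..2*pi} dd2"
  and ap: "x1 (2*pi) = - x1 0" "x2 (2*pi) = - x2 0" "d1 (2*pi) = - d1 0" "d2 (2*pi) = - d2 0"
begin

definition k where "k t = 1 / (1 + e * cos t)"
definition z1 where "z1 t = cos t * x1 t + sin t * x2 t"
definition z2 where "z2 t = - sin t * x1 t + cos t * x2 t"
definition g1 where "g1 t = z2 t + (cos t * d1 t + sin t * d2 t)"
definition h where "h t = z1 t + (- sin t * d1 t + cos t * d2 t)"
definition potq where "potq t = k t * ((3 - 2*u + 3*aa) * (z1 t)^2 + u * (z2 t)^2)"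

lemma rho_pos: "1 + e * cos t > 0"
proof -
  have "- 1 \<le> cos t" by simp
  then have "e * (-1) \<le> e * cos t" using e by (intro mult_left_mono) auto
  then show ?thesis using e by linarith
qed

lemma k_pos: "k t > 0" unfolding k_def using rho_pos by simp

lemma k_ge: "k t \<ge> 1 / (1 + e)"
proof -
  have "e * cos t \<le> e * 1" using e by (intro mult_left_mono) auto
  then show ?thesis unfolding k_def using rho_pos[of t] e by (intro divide_left_mono) auto
qed

lemma k_cont: "continuous_on S k"
  unfolding k_def using rho_pos by (intro continuous_intros) (auto simp: less_imp_neq[symmetric] rho_pos)

lemma k_deriv_free: "isCont k t"
  using k_cont continuous_on_eq_continuous_at by (metis open_UNIV UNIV_I)

lemma x1c: "continuous_on {0..2*pi} x1" using cont_within_of_deriv[OF x1d] .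
lemma x2c: "continuous_on {0..2*pi} x2" using cont_within_of_deriv[OF x2d] .
lemma d1c: "continuous_on {0..2*pi} d1" using cont_within_of_deriv[OF d1d] .
lemma d2c: "continuous_on {0..2*pi} d2" using cont_within_of_deriv[OF d2d] .

lemma z1c: "continuous_on {0..2*pi} z1" unfolding z1_def by (intro continuous_intros x1c x2c)
lemma z2c: "continuous_on {0..2*pi} z2" unfolding z2_def by (intro continuous_intros x1c x2c)
lemma g1c: "continuous_on {0..2*pi} g1" unfolding g1_def by (intro continuous_intros z2c d1c d2c)
lemma hc: "continuous_on {0..2*pi} h" unfolding h_def by (intro continuous_intros z1c d1c d2c)

lemma z1d: "t \<in> {0..2*pi} \<Longrightarrow> (z1 has_real_derivative g1 t) (at t within {0..2*pi})"
  unfolding z1_def[abs_def] g1_def z2_def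
  by (rule derivative_eq_intros x1d x2d refl | assumption)+ (simp add: algebra_simps)

lemma z2d: "t \<in> {0..2*pi} \<Longrightarrow> (z2 has_real_derivative (h t - 2 * z1 t)) (at t within {0..2*pi})"
  unfolding z2_def[abs_def] h_def z1_def
  by (rule derivative_eq_intros x1d x2d refl | assumption)+ (simp add: algebra_simps)

lemma apz: "z1 (2*pi) = - z1 0" "z2 (2*pi) = - z2 0" "g1 (2*pi) = - g1 0" "h (2*pi) = - h 0"
  unfolding z1_def z2_def g1_def h_def using ap by auto

lemma J_eq1:
  assumes Pc: "continuous_on {0..2*pi} P"
  shows "((\<lambda>t. - dd1 t * x1 t - dd2 t * x2 t - (x1 t)^2 - (x2 t)^2 + P t) has_integral I) {0..2*pi}
     \<longleftrightarrow> ((\<lambda>t. (d1 t)^2 + (d2 t)^2 - (x1 t)^2 - (x2 t)^2 + P t) has_integral I) {0..2*pi}"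
proof -
  define W where "W t = - (d1 t * x1 t + d2 t * x2 t)" for t
  have Wd: "(W has_vector_derivative
      ((- dd1 t * x1 t - dd2 t * x2 t - (x1 t)^2 - (x2 t)^2 + P t) - ((d1 t)^2 + (d2 t)^2 - (x1 t)^2 - (x2 t)^2 + P t)))
      (at t within {0..2*pi})" if t: "t \<in> {0..2*pi}" for t
  proof -
    have "(W has_real_derivative
      ((- dd1 t * x1 t - dd2 t * x2 t - (x1 t)^2 - (x2 t)^2 + P t) - ((d1 t)^2 + (d2 t)^2 - (x1 t)^2 - (x2 t)^2 + P t)))
      (at t within {0..2*pi})"
      unfolding W_def[abs_def]
      by (rule derivative_eq_intros x1d x2d d1d d2d refl t)+ (simp add: algebra_simps power2_eq_square)
    then show ?thesis using has_real_derivative_iff_has_vector_derivative by blast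
  qed
  have F: "((\<lambda>t. (- dd1 t * x1 t - dd2 t * x2 t - (x1 t)^2 - (x2 t)^2 + P t) - ((d1 t)^2 + (d2 t)^2 - (x1 t)^2 - (x2 t)^2 + P t)) has_integral 0) {0..2*pi}"
    using fundamental_theorem_of_calculus[of 0 "2*pi" W, OF _ Wd] ap by (simp add: W_def)
  show ?thesis
  proof
    assume "((\<lambda>t. - dd1 t * x1 t - dd2 t * x2 t - (x1 t)^2 - (x2 t)^2 + P t) has_integral I) {0..2*pi}"
    from has_integral_diff[OF this F] show "((\<lambda>t. (d1 t)^2 + (d2 t)^2 - (x1 t)^2 - (x2 t)^2 + P t) has_integral I) {0..2*pi}"
      by (simp add: algebra_simps)
  next
    assume "((\<lambda>t. (d1 t)^2 + (d2 t)^2 - (x1 t)^2 - (x2 t)^2 + P t) has_integral I) {0..2*pi}"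
    from has_integral_add[OF this F] show "((\<lambda>t. - dd1 t * x1 t - dd2 t * x2 t - (x1 t)^2 - (x2 t)^2 + P t) has_integral I) {0..2*pi}"
      by (simp add: algebra_simps)
  qed
qed

lemma J_eq2:
  shows "((\<lambda>t. (d1 t)^2 + (d2 t)^2 - (x1 t)^2 - (x2 t)^2 + P t) has_integral I) {0..2*pi}
     \<longleftrightarrow> ((\<lambda>t. (g1 t)^2 + (h t)^2 - 4 * (z1 t)^2 + P t) has_integral I) {0..2*pi}"
proof -
  define W where "W t = - 2 * (z1 t * z2 t)" for t
  have Wd: "(W has_vector_derivative
      (((d1 t)^2 + (d2 t)^2 - (x1 t)^2 - (x2 t)^2 + P t) - ((g1 t)^2 + (h t)^2 - 4 * (z1 t)^2 + P t)))
      (at t within {0..2*pi})" if t: "t \<in> {0..2*pi}" for t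
  proof -
    have "(W has_real_derivative
      (((d1 t)^2 + (d2 t)^2 - (x1 t)^2 - (x2 t)^2 + P t) - ((g1 t)^2 + (h t)^2 - 4 * (z1 t)^2 + P t)))
      (at t within {0..2*pi})"
      unfolding W_def[abs_def]
      apply (rule derivative_eq_intros z1d z2d refl t)+
      using rot_alg[of "sin t" "cos t" "d1 t" "d2 t" "x1 t" "x2 t"]
      by (simp add: g1_def h_def z1_def z2_def algebra_simps)
    then show ?thesis using has_real_derivative_iff_has_vector_derivative by blast
  qed
  have F: "((\<lambda>t. ((d1 t)^2 + (d2 t)^2 - (x1 t)^2 - (x2 t)^2 + P t) - ((g1 t)^2 + (h t)^2 - 4 * (z1 t)^2 + P t)) has_integral 0) {0..2*pi}"
    using fundamental_theorem_of_calculus[of 0 "2*pi" W, OF _ Wd] apz by (simp add: W_def)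
  show ?thesis
  proof
    assume "((\<lambda>t. (d1 t)^2 + (d2 t)^2 - (x1 t)^2 - (x2 t)^2 + P t) has_integral I) {0..2*pi}"
    from has_integral_diff[OF this F] show "((\<lambda>t. (g1 t)^2 + (h t)^2 - 4 * (z1 t)^2 + P t) has_integral I) {0..2*pi}"
      by (simp add: algebra_simps)
  next
    assume "((\<lambda>t. (g1 t)^2 + (h t)^2 - 4 * (z1 t)^2 + P t) has_integral I) {0..2*pi}"
    from has_integral_add[OF this F] show "((\<lambda>t. (d1 t)^2 + (d2 t)^2 - (x1 t)^2 - (x2 t)^2 + P t) has_integral I) {0..2*pi}"
      by (simp add: algebra_simps)
  qed
qed

definition phK where "phK t = sin t * (1 + e * cos t)"
definition phK1 where "phK1 t = cos t * (1 + e * cos t) - e * sin t * sin t"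
definition phK2 where "phK2 t = - sin t * (1 + e * cos t) - 3 * e * sin t * cos t"

lemma phK_d: "(phK has_real_derivative phK1 t) (at t)"
  unfolding phK_def[abs_def] phK1_def
  by (rule derivative_eq_intros refl)+ (simp add: algebra_simps)

lemma phK1_d: "(phK1 has_real_derivative phK2 t) (at t)"
  unfolding phK1_def[abs_def] phK2_def
  by (rule derivative_eq_intros refl)+ (simp add: algebra_simps)

lemma phK_V: "phK2 t = (3 * k t - 4) * phK t"
  unfolding phK2_def phK_def k_def using rho_pos[of t]
  by (simp add: field_simps)

lemma phK_nz1: "t \<in> {0<..<pi} \<Longrightarrow> phK t \<noteq> 0"
  using sin_gt_zero[of t] rho_pos[of t] by (auto simp: phK_def)

lemma phK_nz2: "t \<in> {pi<..<2*pi} \<Longrightarrow> phK t \<noteq> 0"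
  using sin_lt_zero[of t] rho_pos[of t] by (auto simp: phK_def)

lemma VK_cont: "continuous_on S (\<lambda>t. 3 * k t - 4)"
  by (intro continuous_intros k_cont)

lemma kep_piece:
  assumes ab: "0 \<le> a" "a \<le> b" "b \<le> 2*pi"
  and nz: "\<And>t. t \<in> {a<..<b} \<Longrightarrow> phK t \<noteq> 0"
  and ea: "phK a = 0" "z1 a = 0" "phK1 a \<noteq> 0"
  and eb: "phK b = 0" "z1 b = 0" "phK1 b \<noteq> 0"
  shows "((\<lambda>t. (g1 t - phK1 t / phK t * z1 t)^2) has_integral
           (integral {a..b} (\<lambda>t. (g1 t)^2 + (3 * k t - 4) * (z1 t)^2))) {a..b}"
proof -
  have sub: "{a..b} \<subseteq> {0..2*pi}" using ab by auto
  have "((\<lambda>t. (g1 t - phK1 t / phK t * z1 t)^2) has_integral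
           (integral {a..b} (\<lambda>t. (g1 t)^2 + (3 * k t - 4) * (z1 t)^2)
             - (phK1 b * (z1 b / phK b) * z1 b - phK1 a * (z1 a / phK a) * z1 a))) {a..b}"
    apply (rule picone_main[OF ab(2) phK_d phK1_d phK_V VK_cont nz])
    using ea eb apply auto[3]
     apply (rule DERIV_subset[OF z1d sub]) using sub apply auto[2]
    by (rule continuous_on_subset[OF g1c sub])
  then show ?thesis using ea eb by simp
qed

lemma kepler:
  assumes c0: "z1 0 = 0" and cpi: "z1 pi = 0"
  shows "((\<lambda>t. (g1 t - phK1 t / phK t * z1 t)^2) has_integral
           (integral {0..pi} (\<lambda>t. (g1 t)^2 + (3 * k t - 4) * (z1 t)^2))) {0..pi}"
    and "((\<lambda>t. (g1 t - phK1 t / phK t * z1 t)^2) has_integral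
           (integral {pi..2*pi} (\<lambda>t. (g1 t)^2 + (3 * k t - 4) * (z1 t)^2))) {pi..2*pi}"
    and "((\<lambda>t. (g1 t)^2 + (3 * k t - 4) * (z1 t)^2) has_integral
           (integral {0..pi} (\<lambda>t. (g1 t)^2 + (3 * k t - 4) * (z1 t)^2)
            + integral {pi..2*pi} (\<lambda>t. (g1 t)^2 + (3 * k t - 4) * (z1 t)^2))) {0..2*pi}"
proof -
  have e1: "1 + e \<noteq> 0" "e - 1 \<noteq> 0" using e by auto
  show "((\<lambda>t. (g1 t - phK1 t / phK t * z1 t)^2) has_integral
           (integral {0..pi} (\<lambda>t. (g1 t)^2 + (3 * k t - 4) * (z1 t)^2))) {0..pi}"
    apply (rule kep_piece)
    using c0 cpi e1 phK_nz1 by (auto simp: phK_def phK1_def)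
  show "((\<lambda>t. (g1 t - phK1 t / phK t * z1 t)^2) has_integral
           (integral {pi..2*pi} (\<lambda>t. (g1 t)^2 + (3 * k t - 4) * (z1 t)^2))) {pi..2*pi}"
    apply (rule kep_piece)
    using c0 cpi e1 phK_nz2 apz by (auto simp: phK_def phK1_def)
  have Lc: "continuous_on {0..2*pi} (\<lambda>t. (g1 t)^2 + (3 * k t - 4) * (z1 t)^2)"
    by (intro continuous_intros g1c z1c k_cont)
  have i1: "(\<lambda>t. (g1 t)^2 + (3 * k t - 4) * (z1 t)^2) integrable_on {0..pi}"
    by (rule integrable_continuous_real, rule continuous_on_subset[OF Lc]) auto
  have i2: "(\<lambda>t. (g1 t)^2 + (3 * k t - 4) * (z1 t)^2) integrable_on {pi..2*pi}"
    by (rule integrable_continuous_real, rule continuous_on_subset[OF Lc]) auto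
  show "((\<lambda>t. (g1 t)^2 + (3 * k t - 4) * (z1 t)^2) has_integral
           (integral {0..pi} (\<lambda>t. (g1 t)^2 + (3 * k t - 4) * (z1 t)^2)
            + integral {pi..2*pi} (\<lambda>t. (g1 t)^2 + (3 * k t - 4) * (z1 t)^2))) {0..2*pi}"
    by (rule has_integral_combine[OF _ _ i1[THEN integrable_integral] i2[THEN integrable_integral]]) auto
qed

definition phI where "phI t = 1 + e * cos t"
definition phI1 where "phI1 t = - e * sin t"
definition phI2 where "phI2 t = - e * cos t"

lemma Ipiece:
  fixes x dx :: "real \<Rightarrow> real"
  assumes xd: "\<And>t. t \<in> {0..2*pi} \<Longrightarrow> (x has_real_derivative dx t) (at t within {0..2*pi})"
  and dxc: "continuous_on {0..2*pi} dx"
  shows "((\<lambda>t. (dx t - phI1 t / phI t * x t)^2) has_integral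
           (integral {0..2*pi} (\<lambda>t. (dx t)^2 + (k t - 1) * (x t)^2))) {0..2*pi}"
proof -
  have "((\<lambda>t. (dx t - phI1 t / phI t * x t)^2) has_integral
           (integral {0..2*pi} (\<lambda>t. (dx t)^2 + (k t - 1) * (x t)^2)
             - (phI1 (2*pi) * (x (2*pi) / phI (2*pi)) * x (2*pi) - phI1 0 * (x 0 / phI 0) * x 0))) {0..2*pi}"
    apply (rule picone_main[OF _ _ _ _ _ _ _ _ xd dxc])
    unfolding phI_def phI1_def phI2_def
            apply (simp)
           apply (rule derivative_eq_intros refl | simp)+
       apply (simp add: k_def field_simps less_imp_neq[OF rho_pos, symmetric])
    using rho_pos less_imp_neq[OF rho_pos, symmetric] e by (auto intro!: continuous_intros k_cont)
  then show ?thesis by (simp add: phI1_def)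
qed

lemma xz: "(x1 t)^2 + (x2 t)^2 = (z1 t)^2 + (z2 t)^2"
proof -
  have "sin t ^ 2 + cos t ^ 2 = 1" by simp
  then show ?thesis unfolding z1_def z2_def by algebra
qed

lemma zx: "x1 t = cos t * z1 t - sin t * z2 t" "x2 t = sin t * z1 t + cos t * z2 t"
proof -
  have "sin t ^ 2 + cos t ^ 2 = 1" by simp
  then show "x1 t = cos t * z1 t - sin t * z2 t" "x2 t = sin t * z1 t + cos t * z2 t"
    unfolding z1_def z2_def by algebra+
qed

lemma potq_cont: "continuous_on {0..2*pi} potq"
  unfolding potq_def[abs_def] by (intro continuous_intros k_cont z1c z2c)

lemma ipart:
  "((\<lambda>t. (g1 t)^2 + (h t)^2 - 4 * (z1 t)^2 + k t * ((z1 t)^2 + (z2 t)^2)) has_integral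
      (integral {0..2*pi} (\<lambda>t. (d1 t)^2 + (k t - 1) * (x1 t)^2) + integral {0..2*pi} (\<lambda>t. (d2 t)^2 + (k t - 1) * (x2 t)^2))) {0..2*pi}"
  "integral {0..2*pi} (\<lambda>t. (d1 t)^2 + (k t - 1) * (x1 t)^2) \<ge> 0"
  "integral {0..2*pi} (\<lambda>t. (d2 t)^2 + (k t - 1) * (x2 t)^2) \<ge> 0"
proof -
  have P1: "((\<lambda>t. (d1 t - phI1 t / phI t * x1 t)^2) has_integral
           (integral {0..2*pi} (\<lambda>t. (d1 t)^2 + (k t - 1) * (x1 t)^2))) {0..2*pi}"
    by (rule Ipiece) (auto intro: x1d d1c)
  have P2: "((\<lambda>t. (d2 t - phI1 t / phI t * x2 t)^2) has_integral
           (integral {0..2*pi} (\<lambda>t. (d2 t)^2 + (k t - 1) * (x2 t)^2))) {0..2*pi}"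
    by (rule Ipiece) (auto intro: x2d d2c)
  show "integral {0..2*pi} (\<lambda>t. (d1 t)^2 + (k t - 1) * (x1 t)^2) \<ge> 0"
    by (rule has_integral_nonneg[OF P1]) (use zero_le_power2 in blast)
  show "integral {0..2*pi} (\<lambda>t. (d2 t)^2 + (k t - 1) * (x2 t)^2) \<ge> 0"
    by (rule has_integral_nonneg[OF P2]) (use zero_le_power2 in blast)
  have c1: "continuous_on {0..2*pi} (\<lambda>t. (d1 t)^2 + (k t - 1) * (x1 t)^2)"
    by (intro continuous_intros d1c x1c k_cont)
  have c2: "continuous_on {0..2*pi} (\<lambda>t. (d2 t)^2 + (k t - 1) * (x2 t)^2)"
    by (intro continuous_intros d2c x2c k_cont)
  have "((\<lambda>t. ((d1 t)^2 + (k t - 1) * (x1 t)^2) + ((d2 t)^2 + (k t - 1) * (x2 t)^2)) has_integral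
      (integral {0..2*pi} (\<lambda>t. (d1 t)^2 + (k t - 1) * (x1 t)^2) + integral {0..2*pi} (\<lambda>t. (d2 t)^2 + (k t - 1) * (x2 t)^2))) {0..2*pi}"
    by (intro has_integral_add integrable_integral integrable_continuous_real c1 c2)
  then have "((\<lambda>t. (d1 t)^2 + (d2 t)^2 - (x1 t)^2 - (x2 t)^2 + k t * ((x1 t)^2 + (x2 t)^2)) has_integral
      (integral {0..2*pi} (\<lambda>t. (d1 t)^2 + (k t - 1) * (x1 t)^2) + integral {0..2*pi} (\<lambda>t. (d2 t)^2 + (k t - 1) * (x2 t)^2))) {0..2*pi}"
    by (simp add: algebra_simps)
  then have "((\<lambda>t. (g1 t)^2 + (h t)^2 - 4 * (z1 t)^2 + k t * ((x1 t)^2 + (x2 t)^2)) has_integral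
      (integral {0..2*pi} (\<lambda>t. (d1 t)^2 + (k t - 1) * (x1 t)^2) + integral {0..2*pi} (\<lambda>t. (d2 t)^2 + (k t - 1) * (x2 t)^2))) {0..2*pi}"
    using J_eq2[of "\<lambda>t. k t * ((x1 t)^2 + (x2 t)^2)"] by blast
  then show "((\<lambda>t. (g1 t)^2 + (h t)^2 - 4 * (z1 t)^2 + k t * ((z1 t)^2 + (z2 t)^2)) has_integral
      (integral {0..2*pi} (\<lambda>t. (d1 t)^2 + (k t - 1) * (x1 t)^2) + integral {0..2*pi} (\<lambda>t. (d2 t)^2 + (k t - 1) * (x2 t)^2))) {0..2*pi}"
    by (simp add: xz)
qed

lemma M_form:
  assumes J: "((\<lambda>t. - dd1 t * x1 t - dd2 t * x2 t - (x1 t)^2 - (x2 t)^2 + potq t) has_integral Jv) {0..2*pi}"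
  shows "((\<lambda>t. (g1 t)^2 + (h t)^2 - 4 * (z1 t)^2 + potq t) has_integral Jv) {0..2*pi}"
  using J J_eq1[OF potq_cont] J_eq2[of potq] by blast

lemma decomp: "(g1 t)^2 + (h t)^2 - 4 * (z1 t)^2 + potq t =
   (1 - u) * ((g1 t)^2 + (3 * k t - 4) * (z1 t)^2) + (1 - u) * (h t)^2
   + u * ((g1 t)^2 + (h t)^2 - 4 * (z1 t)^2 + k t * ((z1 t)^2 + (z2 t)^2)) + 3 * aa * (k t * (z1 t)^2)"
  unfolding potq_def by (simp add: algebra_simps)

lemma tail:
  assumes z1z: "\<And>t. t \<in> {0..2*pi} \<Longrightarrow> z1 t = 0"
  and hz: "\<And>t. t \<in> {0..2*pi} \<Longrightarrow> h t = 0"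
  shows "\<forall>t\<in>{0..2*pi}. x1 t = 0 \<and> x2 t = 0"
proof -
  have "\<And>t. t \<in> {0..2*pi} \<Longrightarrow> (z2 has_real_derivative 0) (at t within {0..2*pi})"
    using z2d z1z hz by fastforce
  then obtain C where C: "\<And>t. t \<in> {0..2*pi} \<Longrightarrow> z2 t = C"
    using has_field_derivative_zero_constant[of "{0..2*pi}" z2] by auto
  have "C = - C" using C[of 0] C[of "2*pi"] apz by auto
  then have "C = 0" by simp
  then show ?thesis using C z1z zx by auto
qed

lemma phK1_vals: "phK1 0 = 1 + e" "phK1 pi = e - 1" "phK1 (2*pi) = 1 + e"
  by (simp_all add: phK1_def)

lemma phK_vals: "phK 0 = 0" "phK pi = 0" "phK (2*pi) = 0"
  by (simp_all add: phK_def)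

lemma phK1_cont: "isCont phK1 t" using phK1_d DERIV_isCont by blast

lemma sq_int: fixes f :: "real \<Rightarrow> real" assumes "continuous_on {0..2*pi} f"
  shows "((\<lambda>t. (f t)^2) has_integral integral {0..2*pi} (\<lambda>t. (f t)^2)) {0..2*pi}"
  by (rule integrable_integral, rule integrable_continuous_real, intro continuous_intros assms)

theorem coreA:
  assumes c0: "x1 0 = 0" and cpi: "x1 pi = 0"
  and J: "((\<lambda>t. - dd1 t * x1 t - dd2 t * x2 t - (x1 t)^2 - (x2 t)^2 + potq t) has_integral Jv) {0..2*pi}"
  shows "Jv \<ge> 0 \<and> (Jv = 0 \<longrightarrow> (\<forall>t\<in>{0..2*pi}. x1 t = 0 \<and> x2 t = 0))"
proof -
  have z10: "z1 0 = 0" using c0 by (simp add: z1_def)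
  have z1pi: "z1 pi = 0" using cpi by (simp add: z1_def)
  define S1 where "S1 = integral {0..pi} (\<lambda>t. (g1 t)^2 + (3 * k t - 4) * (z1 t)^2)"
  define S2 where "S2 = integral {pi..2*pi} (\<lambda>t. (g1 t)^2 + (3 * k t - 4) * (z1 t)^2)"
  note K = kepler[OF z10 z1pi, folded S1_def S2_def]
  have S1nn: "S1 \<ge> 0" using has_integral_nonneg[OF K(1)] zero_le_power2 by blast
  have S2nn: "S2 \<ge> 0" using has_integral_nonneg[OF K(2)] zero_le_power2 by blast
  define I1 where "I1 = integral {0..2*pi} (\<lambda>t. (d1 t)^2 + (k t - 1) * (x1 t)^2)"
  define I2 where "I2 = integral {0..2*pi} (\<lambda>t. (d2 t)^2 + (k t - 1) * (x2 t)^2)"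
  note IP = ipart[folded I1_def I2_def]
  define Hv where "Hv = integral {0..2*pi} (\<lambda>t. (h t)^2)"
  have hint: "((\<lambda>t. (h t)^2) has_integral Hv) {0..2*pi}" unfolding Hv_def by (rule sq_int[OF hc])
  have Hvnn: "Hv \<ge> 0" using has_integral_nonneg[OF hint] zero_le_power2 by blast
  define Kv where "Kv = integral {0..2*pi} (\<lambda>t. k t * (z1 t)^2)"
  have kz: "((\<lambda>t. k t * (z1 t)^2) has_integral Kv) {0..2*pi}" unfolding Kv_def
    by (intro integrable_integral integrable_continuous_real continuous_intros k_cont z1c)
  have Kvnn: "Kv \<ge> 0" using has_integral_nonneg[OF kz] k_pos by (simp add: less_imp_le)
  have M: "((\<lambda>t. (g1 t)^2 + (h t)^2 - 4 * (z1 t)^2 + potq t) has_integral Jv) {0..2*pi}"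
    by (rule M_form[OF J])
  have comb: "((\<lambda>t. (1 - u) * ((g1 t)^2 + (3 * k t - 4) * (z1 t)^2) + (1 - u) * (h t)^2
   + u * ((g1 t)^2 + (h t)^2 - 4 * (z1 t)^2 + k t * ((z1 t)^2 + (z2 t)^2)) + 3 * aa * (k t * (z1 t)^2))
     has_integral ((1 - u) * (S1 + S2) + (1 - u) * Hv + u * (I1 + I2) + 3 * aa * Kv)) {0..2*pi}"
    by (intro has_integral_add has_integral_mult_right K(3) hint IP(1) kz)
  then have comb': "((\<lambda>t. (g1 t)^2 + (h t)^2 - 4 * (z1 t)^2 + potq t)
     has_integral ((1 - u) * (S1 + S2) + (1 - u) * Hv + u * (I1 + I2) + 3 * aa * Kv)) {0..2*pi}"
    by (simp only: decomp)
  have Jv: "Jv = (1 - u) * (S1 + S2) + (1 - u) * Hv + u * (I1 + I2) + 3 * aa * Kv"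
    using has_integral_unique[OF M comb'] .
  have u1: "1 - u > 0" using atu by simp
  have t1: "(1 - u) * (S1 + S2) \<ge> 0" using u1 S1nn S2nn by simp
  have t2: "(1 - u) * Hv \<ge> 0" using u1 Hvnn by simp
  have t3: "u * (I1 + I2) \<ge> 0" using atu IP(2,3) by simp
  have t4: "3 * aa * Kv \<ge> 0" using atu Kvnn by simp
  show ?thesis
  proof (intro conjI impI)
    show "Jv \<ge> 0" using Jv t1 t2 t3 t4 by linarith
  next
    assume J0: "Jv = 0"
    have "(1 - u) * (S1 + S2) = 0" "(1 - u) * Hv = 0" using Jv J0 t1 t2 t3 t4 by linarith+
    then have "S1 + S2 = 0" "Hv = 0" using u1 by auto
    then have S0: "S1 = 0" "S2 = 0" "Hv = 0" using S1nn S2nn by auto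
    have pe1: "\<exists>c. \<forall>t\<in>{0..pi}. z1 t = c * phK t"
      apply (rule picone_eq[OF _ phK_d phK1_cont phK_nz1 _ _ _ _ _ _ K(1)[unfolded S0]])
      apply (simp_all add: z10 z1pi phK_vals)
      apply (rule DERIV_subset[OF z1d]; auto)
      by (rule continuous_on_subset[OF g1c]; auto)
    then obtain c1 where c1: "\<And>t. t \<in> {0..pi} \<Longrightarrow> z1 t = c1 * phK t" by blast
    have z12: "z1 (2*pi) = 0" using apz z10 by simp
    have pe2: "\<exists>c. \<forall>t\<in>{pi..2*pi}. z1 t = c * phK t"
      apply (rule picone_eq[OF _ phK_d phK1_cont phK_nz2 _ _ _ _ _ _ K(2)[unfolded S0]])
      apply (simp_all add: z12 z1pi phK_vals)
      apply (rule DERIV_subset[OF z1d]; auto)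
      by (rule continuous_on_subset[OF g1c]; auto)
    then obtain c2 where c2: "\<And>t. t \<in> {pi..2*pi} \<Longrightarrow> z1 t = c2 * phK t" by blast
    have m1: "g1 0 = c1 * phK1 0"
      by (rule deriv_match[of 0 pi 0 z1 _ c1 phK, OF _ _ DERIV_subset[OF z1d] c1 phK_d]) auto
    have m2: "g1 pi = c1 * phK1 pi"
      by (rule deriv_match[of 0 pi pi z1 _ c1 phK, OF _ _ DERIV_subset[OF z1d] c1 phK_d]) auto
    have m3: "g1 pi = c2 * phK1 pi"
      by (rule deriv_match[of pi "2*pi" pi z1 _ c2 phK, OF _ _ DERIV_subset[OF z1d] c2 phK_d]) auto
    have m4: "g1 (2*pi) = c2 * phK1 (2*pi)"
      by (rule deriv_match[of pi "2*pi" "2*pi" z1 _ c2 phK, OF _ _ DERIV_subset[OF z1d] c2 phK_d]) auto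
    have e1: "1 + e \<noteq> 0" "e - 1 \<noteq> 0" using e by auto
    have "(c2 + c1) * (1 + e) = 0" using m1 m4 apz(3) phK1_vals by (simp add: algebra_simps)
    then have "c2 = - c1" using e1 by (smt (verit) mult_eq_0_iff)
    moreover have "c1 = c2" using m2 m3 phK1_vals e1 by simp
    ultimately have cc: "c1 = 0" "c2 = 0" by auto
    have z1z: "\<And>t. t \<in> {0..2*pi} \<Longrightarrow> z1 t = 0"
    proof -
      fix t assume t: "t \<in> {0..2*pi}"
      show "z1 t = 0"
      proof (cases "t \<le> pi")
        case True then show ?thesis using c1[of t] t cc by auto
      next
        case False then show ?thesis using c2[of t] t cc by auto
      qed
    qed
    have "\<forall>t\<in>{0..2*pi}. (h t)^2 = 0"
      using integral_eq_0_iff[of 0 "2*pi" "\<lambda>t. (h t)^2"] S0(3) unfolding Hv_def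
      by (auto intro: continuous_intros hc)
    then have hz: "\<And>t. t \<in> {0..2*pi} \<Longrightarrow> h t = 0" by auto
    show "\<forall>t\<in>{0..2*pi}. x1 t = 0 \<and> x2 t = 0" by (rule tail[OF z1z hz])
  qed
qed

end



lemma wirtinger:
  fixes f f1 :: "real \<Rightarrow> real"
  assumes fd: "\<And>t. t \<in> {0..2*pi} \<Longrightarrow> (f has_real_derivative f1 t) (at t within {0..2*pi})"
  and f1c: "continuous_on {0..2*pi} f1"
  and ap: "f (2*pi) = - f 0"
  shows "0 \<le> integral {0..2*pi} (\<lambda>t. (f1 t)^2 + (- 1/4) * (f t)^2)"
proof -
  have fc: "continuous_on {0..2*pi} f" using cont_within_of_deriv[OF fd] .
  obtain t0 where t0: "0 \<le> t0" "t0 \<le> 2*pi" "f t0 = 0"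
  proof (cases "f 0 \<ge> 0")
    case True
    then obtain x where "x \<ge> 0" "x \<le> 2*pi" "f x = 0"
      using IVT2'[where f=f and a=0 and b="2*pi" and y=0] fc ap by auto
    then show ?thesis using that by blast
  next
    case False
    then obtain x where "x \<ge> 0" "x \<le> 2*pi" "f x = 0"
      using IVT'[where f=f and a=0 and b="2*pi" and y=0] fc ap by auto
    then show ?thesis using that by blast
  qed
  define \<phi> where "\<phi> t = sin ((t - t0) / 2)" for t
  define \<phi>1 where "\<phi>1 t = cos ((t - t0) / 2) / 2" for t
  define \<phi>2 where "\<phi>2 t = - sin ((t - t0) / 2) / 4" for t
  have phid: "\<And>t. (\<phi> has_real_derivative \<phi>1 t) (at t)"
    unfolding \<phi>_def[abs_def] \<phi>1_def by (rule derivative_eq_intros refl | simp)+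
  have phi1d: "\<And>t. (\<phi>1 has_real_derivative \<phi>2 t) (at t)"
    unfolding \<phi>1_def[abs_def] \<phi>2_def by (rule derivative_eq_intros refl | simp)+
  have phiV: "\<And>t. \<phi>2 t = (- 1/4) * \<phi> t" unfolding \<phi>2_def \<phi>_def by simp
  have Vc: "continuous_on S (\<lambda>t. - 1/4 :: real)" for S by simp
  have cases_t0: "t0 = 0 \<or> t0 = 2*pi \<or> (0 < t0 \<and> t0 < 2*pi)" using t0 by auto
  have f0: "f 0 = 0" if "t0 = 0 \<or> t0 = 2*pi" using that t0 ap by auto
  have phi0: "\<phi> 0 = 0 \<Longrightarrow> f 0 = 0 \<and> \<phi>1 0 \<noteq> 0"
  proof -
    assume a: "\<phi> 0 = 0"
    have "t0 = 0 \<or> t0 = 2*pi"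
    proof (rule ccontr)
      assume "\<not> (t0 = 0 \<or> t0 = 2*pi)"
      then have "0 < t0 / 2" "t0 / 2 < pi" using cases_t0 by auto
      then have "sin (t0/2) > 0" by (rule sin_gt_zero)
      then show False using a by (simp add: \<phi>_def)
    qed
    then show ?thesis using f0 by (auto simp: \<phi>1_def)
  qed
  have phi2pi: "\<phi> (2*pi) = 0 \<Longrightarrow> f (2*pi) = 0 \<and> \<phi>1 (2*pi) \<noteq> 0"
  proof -
    assume a: "\<phi> (2*pi) = 0"
    have e: "(2 * pi - t0) / 2 = pi - t0/2" by (simp add: field_simps)
    have "t0 = 0 \<or> t0 = 2*pi"
    proof (rule ccontr)
      assume "\<not> (t0 = 0 \<or> t0 = 2*pi)"
      then have "0 < t0 / 2" "t0 / 2 < pi" using cases_t0 by auto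
      then have "sin (t0/2) > 0" by (rule sin_gt_zero)
      then show False using a by (simp add: \<phi>_def e)
    qed
    then show ?thesis using f0 ap by (auto simp: \<phi>1_def e)
  qed
  have sub1: "{0..t0} \<subseteq> {0..2*pi}" and sub2: "{t0..2*pi} \<subseteq> {0..2*pi}" using t0 by auto
  have R1: "((\<lambda>t. (f1 t - \<phi>1 t / \<phi> t * f t)^2) has_integral
           (integral {0..t0} (\<lambda>t. (f1 t)^2 + (- 1/4) * (f t)^2)
             - (\<phi>1 t0 * (f t0 / \<phi> t0) * f t0 - \<phi>1 0 * (f 0 / \<phi> 0) * f 0))) {0..t0}"
  proof (rule picone_main[OF t0(1) phid phi1d phiV Vc])
    show "\<And>t. t \<in> {0<..<t0} \<Longrightarrow> \<phi> t \<noteq> 0"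
    proof -
      fix t assume t: "t \<in> {0<..<t0}"
      have "0 < (t0 - t)/2" "(t0 - t)/2 < pi" using t t0 by auto
      then have "sin ((t0 - t)/2) > 0" by (rule sin_gt_zero)
      moreover have "sin ((t - t0)/2) = - sin ((t0 - t)/2)"
        by (metis minus_diff_eq minus_divide_left sin_minus)
      ultimately show "\<phi> t \<noteq> 0" unfolding \<phi>_def by simp
    qed
    show "\<phi> 0 = 0 \<Longrightarrow> f 0 = 0 \<and> \<phi>1 0 \<noteq> 0" by (rule phi0)
    show "\<phi> t0 = 0 \<Longrightarrow> f t0 = 0 \<and> \<phi>1 t0 \<noteq> 0" using t0 by (simp add: \<phi>1_def)
    show "\<And>t. t \<in> {0..t0} \<Longrightarrow> (f has_real_derivative f1 t) (at t within {0..t0})"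
      using DERIV_subset[OF fd sub1] sub1 by blast
    show "continuous_on {0..t0} f1" using continuous_on_subset[OF f1c sub1] .
  qed
  have R2: "((\<lambda>t. (f1 t - \<phi>1 t / \<phi> t * f t)^2) has_integral
           (integral {t0..2*pi} (\<lambda>t. (f1 t)^2 + (- 1/4) * (f t)^2)
             - (\<phi>1 (2*pi) * (f (2*pi) / \<phi> (2*pi)) * f (2*pi) - \<phi>1 t0 * (f t0 / \<phi> t0) * f t0))) {t0..2*pi}"
  proof (rule picone_main[OF t0(2) phid phi1d phiV Vc])
    show "\<And>t. t \<in> {t0<..<2*pi} \<Longrightarrow> \<phi> t \<noteq> 0"
    proof -
      fix t assume t: "t \<in> {t0<..<2*pi}"
      have "0 < (t - t0)/2" "(t - t0)/2 < pi" using t t0 by auto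
      then have "sin ((t - t0)/2) > 0" by (rule sin_gt_zero)
      then show "\<phi> t \<noteq> 0" unfolding \<phi>_def by simp
    qed
    show "\<phi> (2*pi) = 0 \<Longrightarrow> f (2*pi) = 0 \<and> \<phi>1 (2*pi) \<noteq> 0" by (rule phi2pi)
    show "\<phi> t0 = 0 \<Longrightarrow> f t0 = 0 \<and> \<phi>1 t0 \<noteq> 0" using t0 by (simp add: \<phi>1_def)
    show "\<And>t. t \<in> {t0..2*pi} \<Longrightarrow> (f has_real_derivative f1 t) (at t within {t0..2*pi})"
      using DERIV_subset[OF fd sub2] sub2 by blast
    show "continuous_on {t0..2*pi} f1" using continuous_on_subset[OF f1c sub2] .
  qed
  have Hb: "\<phi>1 (2*pi) * (f (2*pi) / \<phi> (2*pi)) * f (2*pi) = \<phi>1 0 * (f 0 / \<phi> 0) * f 0"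
  proof -
    have e: "(2 * pi - t0) / 2 = pi - t0/2" by (simp add: field_simps)
    have e2: "(0 - t0) / 2 = - (t0/2)" by simp
    show ?thesis unfolding \<phi>1_def \<phi>_def e e2 ap by simp
  qed
  define L where "L = (\<lambda>t. (f1 t)^2 + (- 1/4) * (f t)^2)"
  have Lc: "continuous_on {0..2*pi} L" unfolding L_def by (intro continuous_intros f1c fc)
  have i1: "L integrable_on {0..t0}" by (rule integrable_continuous_real, rule continuous_on_subset[OF Lc sub1])
  have i2: "L integrable_on {t0..2*pi}" by (rule integrable_continuous_real, rule continuous_on_subset[OF Lc sub2])
  have tot: "(L has_integral (integral {0..t0} L + integral {t0..2*pi} L)) {0..2*pi}"
    by (rule has_integral_combine[OF t0(1) t0(2) integrable_integral[OF i1] integrable_integral[OF i2]])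
  have n1: "0 \<le> integral {0..t0} L - (0 - \<phi>1 0 * (f 0 / \<phi> 0) * f 0)"
    using has_integral_nonneg[OF R1] t0(3) zero_le_power2 unfolding L_def by auto
  have n2: "0 \<le> integral {t0..2*pi} L - (\<phi>1 (2*pi) * (f (2*pi) / \<phi> (2*pi)) * f (2*pi) - 0)"
    using has_integral_nonneg[OF R2] t0(3) zero_le_power2 unfolding L_def by auto
  have "0 \<le> integral {0..t0} L + integral {t0..2*pi} L" using n1 n2 Hb by linarith
  then show ?thesis using integral_unique[OF tot] unfolding L_def by simp
qed




context core begin

lemma decompB: "(g1 t)^2 + (h t)^2 - 4 * (z1 t)^2 + potq t =
   (1 - u) * ((g1 t)^2 + ((3 + 3 * aa) * k t - 4) * (z1 t)^2) + (1 - u) * (h t)^2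
   + u * ((g1 t)^2 + (h t)^2 - 4 * (z1 t)^2 + k t * ((z1 t)^2 + (z2 t)^2)) + (3 * aa * u) * (k t * (z1 t)^2)"
  unfolding potq_def by (simp add: algebra_simps)

theorem coreB:
  assumes big: "aa > 1/4 + 5/4 * e"
  and J: "((\<lambda>t. - dd1 t * x1 t - dd2 t * x2 t - (x1 t)^2 - (x2 t)^2 + potq t) has_integral Jv) {0..2*pi}"
  shows "Jv \<ge> 0 \<and> (Jv = 0 \<longrightarrow> (\<forall>t\<in>{0..2*pi}. x1 t = 0 \<and> x2 t = 0))"
proof -
  define c0 where "c0 = (3 + 3 * aa) / (1 + e)"
  have ep: "1 + e > 0" using e by simp
  have c0big: "c0 > 15/4" unfolding c0_def using big ep by (simp add: field_simps)
  define \<kappa> where "\<kappa> = 1/4 + c0 - 4"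
  have kap: "\<kappa> > 0" unfolding \<kappa>_def using c0big by simp
  define SA where "SA = integral {0..2*pi} (\<lambda>t. (g1 t)^2 + ((3 + 3 * aa) * k t - 4) * (z1 t)^2)"
  have SAi: "((\<lambda>t. (g1 t)^2 + ((3 + 3 * aa) * k t - 4) * (z1 t)^2) has_integral SA) {0..2*pi}"
    unfolding SA_def
    by (rule integrable_integral, rule integrable_continuous_real, intro continuous_intros g1c z1c k_cont)
  define W where "W = integral {0..2*pi} (\<lambda>t. (g1 t)^2)"
  define Z where "Z = integral {0..2*pi} (\<lambda>t. (z1 t)^2)"
  have Wi: "((\<lambda>t. (g1 t)^2) has_integral W) {0..2*pi}" unfolding W_def by (rule sq_int[OF g1c])
  have Zi: "((\<lambda>t. (z1 t)^2) has_integral Z) {0..2*pi}" unfolding Z_def by (rule sq_int[OF z1c])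
  have Znn: "Z \<ge> 0" using has_integral_nonneg[OF Zi] zero_le_power2 by blast
  have wir: "0 \<le> integral {0..2*pi} (\<lambda>t. (g1 t)^2 + (- 1/4) * (z1 t)^2)"
    by (rule wirtinger[OF z1d g1c apz(1)])
  have wi2: "((\<lambda>t. (g1 t)^2 + (- 1/4) * (z1 t)^2) has_integral (W + (-1/4) * Z)) {0..2*pi}"
    by (intro has_integral_add has_integral_mult_right Wi Zi)
  have WZ: "W - Z/4 \<ge> 0" using wir integral_unique[OF wi2] by simp
  have low: "((\<lambda>t. (g1 t)^2 + (c0 - 4) * (z1 t)^2) has_integral (W + (c0 - 4) * Z)) {0..2*pi}"
    by (intro has_integral_add has_integral_mult_right Wi Zi)
  have pw: "(g1 t)^2 + (c0 - 4) * (z1 t)^2 \<le> (g1 t)^2 + ((3 + 3 * aa) * k t - 4) * (z1 t)^2" for t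
  proof -
    have "c0 \<le> (3 + 3 * aa) * k t"
      unfolding c0_def using k_ge[of t] atu(1)
      by (metis divide_inverse mult_left_mono inverse_eq_divide less_eq_real_def mult_1_right
          add_nonneg_nonneg zero_le_numeral mult_nonneg_nonneg)
    then show ?thesis by (intro add_left_mono mult_right_mono) auto
  qed
  have SAlow: "W + (c0 - 4) * Z \<le> SA" using has_integral_le[OF low SAi pw] .
  have SAk: "SA \<ge> \<kappa> * Z" using SAlow WZ unfolding \<kappa>_def by (simp add: algebra_simps)
  define I1 where "I1 = integral {0..2*pi} (\<lambda>t. (d1 t)^2 + (k t - 1) * (x1 t)^2)"
  define I2 where "I2 = integral {0..2*pi} (\<lambda>t. (d2 t)^2 + (k t - 1) * (x2 t)^2)"
  note IP = ipart[folded I1_def I2_def]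
  define Hv where "Hv = integral {0..2*pi} (\<lambda>t. (h t)^2)"
  have hint: "((\<lambda>t. (h t)^2) has_integral Hv) {0..2*pi}" unfolding Hv_def by (rule sq_int[OF hc])
  have Hvnn: "Hv \<ge> 0" using has_integral_nonneg[OF hint] zero_le_power2 by blast
  define Kv where "Kv = integral {0..2*pi} (\<lambda>t. k t * (z1 t)^2)"
  have kz: "((\<lambda>t. k t * (z1 t)^2) has_integral Kv) {0..2*pi}" unfolding Kv_def
    by (intro integrable_integral integrable_continuous_real continuous_intros k_cont z1c)
  have Kvnn: "Kv \<ge> 0" using has_integral_nonneg[OF kz] k_pos by (simp add: less_imp_le)
  have M: "((\<lambda>t. (g1 t)^2 + (h t)^2 - 4 * (z1 t)^2 + potq t) has_integral Jv) {0..2*pi}"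
    by (rule M_form[OF J])
  have comb: "((\<lambda>t. (1 - u) * ((g1 t)^2 + ((3 + 3 * aa) * k t - 4) * (z1 t)^2) + (1 - u) * (h t)^2
   + u * ((g1 t)^2 + (h t)^2 - 4 * (z1 t)^2 + k t * ((z1 t)^2 + (z2 t)^2)) + (3 * aa * u) * (k t * (z1 t)^2))
     has_integral ((1 - u) * SA + (1 - u) * Hv + u * (I1 + I2) + (3 * aa * u) * Kv)) {0..2*pi}"
    by (intro has_integral_add has_integral_mult_right SAi hint IP(1) kz)
  then have comb': "((\<lambda>t. (g1 t)^2 + (h t)^2 - 4 * (z1 t)^2 + potq t)
     has_integral ((1 - u) * SA + (1 - u) * Hv + u * (I1 + I2) + (3 * aa * u) * Kv)) {0..2*pi}"
    by (simp only: decompB)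
  have Jv: "Jv = (1 - u) * SA + (1 - u) * Hv + u * (I1 + I2) + (3 * aa * u) * Kv"
    using has_integral_unique[OF M comb'] .
  have u1: "1 - u > 0" using atu by simp
  have t1: "(1 - u) * SA \<ge> (1 - u) * (\<kappa> * Z)" using u1 SAk by simp
  have t1': "(1 - u) * (\<kappa> * Z) \<ge> 0" using u1 kap Znn by simp
  have t2: "(1 - u) * Hv \<ge> 0" using u1 Hvnn by simp
  have t3: "u * (I1 + I2) \<ge> 0" using atu IP(2,3) by simp
  have t4: "(3 * aa * u) * Kv \<ge> 0" using atu Kvnn by simp
  show ?thesis
  proof (intro conjI impI)
    show "Jv \<ge> 0" using Jv t1 t1' t2 t3 t4 by linarith
  next
    assume J0: "Jv = 0"
    have "(1 - u) * (\<kappa> * Z) = 0" "(1 - u) * Hv = 0" using Jv J0 t1 t1' t2 t3 t4 by linarith+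
    then have Z0: "Z = 0" and H0: "Hv = 0" using u1 kap by auto
    have "\<forall>t\<in>{0..2*pi}. (z1 t)^2 = 0"
      using integral_eq_0_iff[of 0 "2*pi" "\<lambda>t. (z1 t)^2"] Z0 unfolding Z_def
      by (auto intro: continuous_intros z1c)
    then have z1z: "\<And>t. t \<in> {0..2*pi} \<Longrightarrow> z1 t = 0" by auto
    have "\<forall>t\<in>{0..2*pi}. (h t)^2 = 0"
      using integral_eq_0_iff[of 0 "2*pi" "\<lambda>t. (h t)^2"] H0 unfolding Hv_def
      by (auto intro: continuous_intros hc)
    then have hz: "\<And>t. t \<in> {0..2*pi} \<Longrightarrow> h t = 0" by auto
    show "\<forall>t\<in>{0..2*pi}. x1 t = 0 \<and> x2 t = 0" by (rule tail[OF z1z hz])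
  qed
qed

end



definition ip :: "complex \<times> complex \<Rightarrow> complex \<times> complex \<Rightarrow> complex" where
  "ip u v = fst u * cnj (fst v) + snd u * cnj (snd v)"

lemma Re_deriv: "(f has_vector_derivative f') F \<Longrightarrow> ((\<lambda>t. Re (f t)) has_real_derivative Re f') F"
  using bounded_linear.has_vector_derivative[OF bounded_linear_Re]
  by (simp add: has_real_derivative_iff_has_vector_derivative)

lemma Im_deriv: "(f has_vector_derivative f') F \<Longrightarrow> ((\<lambda>t. Im (f t)) has_real_derivative Im f') F"
  using bounded_linear.has_vector_derivative[OF bounded_linear_Im]
  by (simp add: has_real_derivative_iff_has_vector_derivative)

definition Ew :: "real \<Rightarrow> real \<Rightarrow> real \<Rightarrow> real \<Rightarrow> complex \<Rightarrow> complex \<Rightarrow> complex \<Rightarrow> complex \<Rightarrow> complex \<times> complex" where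
  "Ew aa bt e t v1 v2 dd1 dd2 = (- dd1, - dd2) - (v1, v2) + pot ((3*aa + bt + 1)/2) ((aa + bt + 1)/2) e t (v1, v2)"

lemma AB_vals: fixes aa bt :: real shows "1 + (3*aa + bt + 1)/2 + 3 * ((aa + bt + 1)/2) = 3 - 2*(-bt) + 3*aa"
   "1 + (3*aa + bt + 1)/2 - 3 * ((aa + bt + 1)/2) = -bt"
  by (simp_all add: field_simps)

lemma pw_alg:
  fixes v1 v2 dd1 dd2 :: complex and A B kk c s :: real
  shows "Re ((- dd1 - v1 + (complex_of_real (kk * (A * c^2 + B * s^2)) * v1 + complex_of_real (kk * (A - B) * c * s) * v2)) * cnj v1
          + (- dd2 - v2 + (complex_of_real (kk * (A - B) * c * s) * v1 + complex_of_real (kk * (A * s^2 + B * c^2)) * v2)) * cnj v2) =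
    (- Re dd1 * Re v1 - Re dd2 * Re v2 - (Re v1)^2 - (Re v2)^2 +
       kk * (A * (c * Re v1 + s * Re v2)^2 + B * (- s * Re v1 + c * Re v2)^2))
  + (- Im dd1 * Im v1 - Im dd2 * Im v2 - (Im v1)^2 - (Im v2)^2 +
       kk * (A * (c * Im v1 + s * Im v2)^2 + B * (- s * Im v1 + c * Im v2)^2))"
  by (simp add: algebra_simps power2_eq_square)

lemma pw_identity:
  fixes v1 v2 dd1 dd2 :: complex
  shows "Re (ip (Ew aa bt e t v1 v2 dd1 dd2) (v1, v2)) =
    (- Re dd1 * Re v1 - Re dd2 * Re v2 - (Re v1)^2 - (Re v2)^2 +
       1 / (1 + e * cos t) * ((3 - 2*(-bt) + 3*aa) * (cos t * Re v1 + sin t * Re v2)^2 + (-bt) * (- sin t * Re v1 + cos t * Re v2)^2))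
  + (- Im dd1 * Im v1 - Im dd2 * Im v2 - (Im v1)^2 - (Im v2)^2 +
       1 / (1 + e * cos t) * ((3 - 2*(-bt) + 3*aa) * (cos t * Im v1 + sin t * Im v2)^2 + (-bt) * (- sin t * Im v1 + cos t * Im v2)^2))"
  using pw_alg[of dd1 v1 "1 / (1 + e * cos t)" "3 - 2*(-bt) + 3*aa" "cos t" "-bt" "sin t" v2 dd2]
  unfolding Ew_def ip_def pot_def Let_def AB_vals
  by simp

locale cw =
  fixes w1 w2 w1' w2' w1'' w2'' :: "real \<Rightarrow> complex" and aa bt e :: real
  assumes par: "0 \<le> aa" "-1 < bt" "bt \<le> 0" "0 \<le> e" "e < 1"
  and w1d: "\<And>t. t \<in> {0..2*pi} \<Longrightarrow> (w1 has_vector_derivative w1' t) (at t within {0..2*pi})"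
  and w2d: "\<And>t. t \<in> {0..2*pi} \<Longrightarrow> (w2 has_vector_derivative w2' t) (at t within {0..2*pi})"
  and w1'd: "\<And>t. t \<in> {0..2*pi} \<Longrightarrow> (w1' has_vector_derivative w1'' t) (at t within {0..2*pi})"
  and w2'd: "\<And>t. t \<in> {0..2*pi} \<Longrightarrow> (w2' has_vector_derivative w2'' t) (at t within {0..2*pi})"
  and w1''c: "continuous_on {0..2*pi} w1''"
  and w2''c: "continuous_on {0..2*pi} w2''"
  and apw: "w1 (2*pi) = - w1 0" "w2 (2*pi) = - w2 0" "w1' (2*pi) = - w1' 0" "w2' (2*pi) = - w2' 0"
begin

lemma coreRe: "core (\<lambda>t. Re (w1 t)) (\<lambda>t. Re (w2 t)) (\<lambda>t. Re (w1' t)) (\<lambda>t. Re (w2' t)) (\<lambda>t. Re (w1'' t)) (\<lambda>t. Re (w2'' t)) e aa (-bt)"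
  using par apw
  by unfold_locales (auto intro!: Re_deriv w1d w2d w1'd w2'd continuous_intros w1''c w2''c)

lemma coreIm: "core (\<lambda>t. Im (w1 t)) (\<lambda>t. Im (w2 t)) (\<lambda>t. Im (w1' t)) (\<lambda>t. Im (w2' t)) (\<lambda>t. Im (w1'' t)) (\<lambda>t. Im (w2'' t)) e aa (-bt)"
  using par apw
  by unfold_locales (auto intro!: Im_deriv w1d w2d w1'd w2'd continuous_intros w1''c w2''c)

interpretation R: core "\<lambda>t. Re (w1 t)" "\<lambda>t. Re (w2 t)" "\<lambda>t. Re (w1' t)" "\<lambda>t. Re (w2' t)" "\<lambda>t. Re (w1'' t)" "\<lambda>t. Re (w2'' t)" e aa "-bt"
  by (rule coreRe)

interpretation I: core "\<lambda>t. Im (w1 t)" "\<lambda>t. Im (w2 t)" "\<lambda>t. Im (w1' t)" "\<lambda>t. Im (w2' t)" "\<lambda>t. Im (w1'' t)" "\<lambda>t. Im (w2'' t)" e aa "-bt"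
  by (rule coreIm)

lemma split_integral:
  assumes J: "((\<lambda>t. Re (ip (Ew aa bt e t (w1 t) (w2 t) (w1'' t) (w2'' t)) (w1 t, w2 t))) has_integral Jv) {0..2*pi}"
  obtains Jp Jq where
    "((\<lambda>t. - Re (w1'' t) * Re (w1 t) - Re (w2'' t) * Re (w2 t) - (Re (w1 t))^2 - (Re (w2 t))^2 + R.potq t) has_integral Jp) {0..2*pi}"
    "((\<lambda>t. - Im (w1'' t) * Im (w1 t) - Im (w2'' t) * Im (w2 t) - (Im (w1 t))^2 - (Im (w2 t))^2 + I.potq t) has_integral Jq) {0..2*pi}"
    "Jv = Jp + Jq"
proof -
  have cp: "continuous_on {0..2*pi} (\<lambda>t. - Re (w1'' t) * Re (w1 t) - Re (w2'' t) * Re (w2 t) - (Re (w1 t))^2 - (Re (w2 t))^2 + R.potq t)"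
    by (intro continuous_intros R.dd1c R.dd2c R.x1c R.x2c R.potq_cont)
  have cq: "continuous_on {0..2*pi} (\<lambda>t. - Im (w1'' t) * Im (w1 t) - Im (w2'' t) * Im (w2 t) - (Im (w1 t))^2 - (Im (w2 t))^2 + I.potq t)"
    by (intro continuous_intros I.dd1c I.dd2c I.x1c I.x2c I.potq_cont)
  note ip = integrable_integral[OF integrable_continuous_real[OF cp]]
  note iq = integrable_integral[OF integrable_continuous_real[OF cq]]
  have "((\<lambda>t. Re (ip (Ew aa bt e t (w1 t) (w2 t) (w1'' t) (w2'' t)) (w1 t, w2 t))) has_integral
     (integral {0..2*pi} (\<lambda>t. - Re (w1'' t) * Re (w1 t) - Re (w2'' t) * Re (w2 t) - (Re (w1 t))^2 - (Re (w2 t))^2 + R.potq t)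
     + integral {0..2*pi} (\<lambda>t. - Im (w1'' t) * Im (w1 t) - Im (w2'' t) * Im (w2 t) - (Im (w1 t))^2 - (Im (w2 t))^2 + I.potq t))) {0..2*pi}"
    using has_integral_add[OF ip iq]
    unfolding pw_identity R.potq_def I.potq_def R.k_def I.k_def R.z1_def R.z2_def I.z1_def I.z2_def
    by simp
  from that[OF ip iq] has_integral_unique[OF J this] show ?thesis by blast
qed

theorem redA:
  assumes c0: "w1 0 = 0" and cpi: "w1 pi = 0"
  and J: "((\<lambda>t. Re (ip (Ew aa bt e t (w1 t) (w2 t) (w1'' t) (w2'' t)) (w1 t, w2 t))) has_integral Jv) {0..2*pi}"
  shows "Jv \<ge> 0 \<and> (Jv = 0 \<longrightarrow> (\<forall>t\<in>{0..2*pi}. w1 t = 0 \<and> w2 t = 0))"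
proof -
  obtain Jp Jq where p: "((\<lambda>t. - Re (w1'' t) * Re (w1 t) - Re (w2'' t) * Re (w2 t) - (Re (w1 t))^2 - (Re (w2 t))^2 + R.potq t) has_integral Jp) {0..2*pi}"
    and q: "((\<lambda>t. - Im (w1'' t) * Im (w1 t) - Im (w2'' t) * Im (w2 t) - (Im (w1 t))^2 - (Im (w2 t))^2 + I.potq t) has_integral Jq) {0..2*pi}"
    and s: "Jv = Jp + Jq"
    using split_integral[OF J] by blast
  have A: "Jp \<ge> 0 \<and> (Jp = 0 \<longrightarrow> (\<forall>t\<in>{0..2*pi}. Re (w1 t) = 0 \<and> Re (w2 t) = 0))"
    by (rule R.coreA[OF _ _ p]) (use c0 cpi in auto)
  have B: "Jq \<ge> 0 \<and> (Jq = 0 \<longrightarrow> (\<forall>t\<in>{0..2*pi}. Im (w1 t) = 0 \<and> Im (w2 t) = 0))"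
    by (rule I.coreA[OF _ _ q]) (use c0 cpi in auto)
  show ?thesis using A B s by (auto simp: complex_eq_iff)
qed

theorem redB:
  assumes big: "aa > 1/4 + 5/4 * e"
  and J: "((\<lambda>t. Re (ip (Ew aa bt e t (w1 t) (w2 t) (w1'' t) (w2'' t)) (w1 t, w2 t))) has_integral Jv) {0..2*pi}"
  shows "Jv \<ge> 0 \<and> (Jv = 0 \<longrightarrow> (\<forall>t\<in>{0..2*pi}. w1 t = 0 \<and> w2 t = 0))"
proof -
  obtain Jp Jq where p: "((\<lambda>t. - Re (w1'' t) * Re (w1 t) - Re (w2'' t) * Re (w2 t) - (Re (w1 t))^2 - (Re (w2 t))^2 + R.potq t) has_integral Jp) {0..2*pi}"
    and q: "((\<lambda>t. - Im (w1'' t) * Im (w1 t) - Im (w2'' t) * Im (w2 t) - (Im (w1 t))^2 - (Im (w2 t))^2 + I.potq t) has_integral Jq) {0..2*pi}"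
    and s: "Jv = Jp + Jq"
    using split_integral[OF J] by blast
  have A: "Jp \<ge> 0 \<and> (Jp = 0 \<longrightarrow> (\<forall>t\<in>{0..2*pi}. Re (w1 t) = 0 \<and> Re (w2 t) = 0))"
    by (rule R.coreB[OF big p])
  have B: "Jq \<ge> 0 \<and> (Jq = 0 \<longrightarrow> (\<forall>t\<in>{0..2*pi}. Im (w1 t) = 0 \<and> Im (w2 t) = 0))"
    by (rule I.coreB[OF big q])
  show ?thesis using A B s by (auto simp: complex_eq_iff)
qed

end




lemma rho_pos': fixes e t :: real assumes "0 \<le> e" "e < 1" shows "1 + e * cos t > 0"
proof -
  have "- 1 \<le> cos t" by simp
  then have "e * (-1) \<le> e * cos t" using assms by (intro mult_left_mono) auto
  then show ?thesis using assms by linarith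
qed

lemma pot_cont:
  assumes e: "0 \<le> e" "e < 1" and yc: "continuous_on S y"
  shows "continuous_on S (\<lambda>t. pot \<alpha> \<beta> e t (y t))"
proof -
  have nz: "\<And>t. 1 + e * cos t \<noteq> 0" using rho_pos'[OF e] by (metis less_irrefl)
  show ?thesis
    unfolding pot_def Let_def
    by (intro continuous_intros yc continuous_on_fst continuous_on_snd) (auto simp: nz)
qed

definition eigd :: "real \<Rightarrow> real \<Rightarrow> real \<Rightarrow> real \<Rightarrow> (real \<Rightarrow> complex \<times> complex) \<Rightarrow> (real \<Rightarrow> complex \<times> complex) \<Rightarrow> (real \<Rightarrow> complex \<times> complex) \<Rightarrow> bool" where
  "eigd \<alpha> \<beta> e lam y y' y'' \<longleftrightarrow>
        (\<forall>t\<in>{0..2*pi}. (y has_vector_derivative y' t) (at t within {0..2*pi}) \<and>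
                        (y' has_vector_derivative y'' t) (at t within {0..2*pi})) \<and>
        y (2*pi) = - y 0 \<and> y' (2*pi) = - y' 0 \<and>
        (\<forall>t\<in>{0..2*pi}. - y'' t - y t + pot \<alpha> \<beta> e t (y t) = lam *\<^sub>R y t)"

lemma is_eigfun_eigd: "is_eigfun \<alpha> \<beta> e lam y \<longleftrightarrow> (\<forall>t. t \<notin> {0..2*pi} \<longrightarrow> y t = 0) \<and> (\<exists>y' y''. eigd \<alpha> \<beta> e lam y y' y'')"
  unfolding is_eigfun_def eigd_def by blast

lemma eigd_cont:
  assumes d: "eigd \<alpha> \<beta> e lam y y' y''" and e: "0 \<le> e" "e < 1"
  shows "continuous_on {0..2*pi} y" "continuous_on {0..2*pi} y'" "continuous_on {0..2*pi} y''"
proof -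
  show yc: "continuous_on {0..2*pi} y"
    using d unfolding eigd_def by (intro continuous_on_vector_derivative) auto
  show "continuous_on {0..2*pi} y'"
    using d unfolding eigd_def by (intro continuous_on_vector_derivative) auto
  have eq: "pot \<alpha> \<beta> e t (y t) - y t - lam *\<^sub>R y t = y'' t" if t: "t \<in> {0..2*pi}" for t
  proof -
    have h: "- y'' t - y t + pot \<alpha> \<beta> e t (y t) = lam *\<^sub>R y t" using d t unfolding eigd_def by auto
    show ?thesis unfolding h[symmetric] by (simp add: algebra_simps)
  qed
  have "continuous_on {0..2*pi} (\<lambda>t. pot \<alpha> \<beta> e t (y t) - y t - lam *\<^sub>R y t)"
    by (intro continuous_intros pot_cont[OF e yc] yc)
  then show "continuous_on {0..2*pi} y''" using continuous_on_eq eq by blast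
qed

lemma fst_deriv: "(f has_vector_derivative f') F \<Longrightarrow> ((\<lambda>t. fst (f t)) has_vector_derivative fst f') F"
  using bounded_linear.has_vector_derivative[OF bounded_linear_fst] by blast
lemma snd_deriv: "(f has_vector_derivative f') F \<Longrightarrow> ((\<lambda>t. snd (f t)) has_vector_derivative snd f') F"
  using bounded_linear.has_vector_derivative[OF bounded_linear_snd] by blast

lemma ip_deriv:
  assumes "(u has_vector_derivative u') (at t within S)" "(v has_vector_derivative v') (at t within S)"
  shows "((\<lambda>t. ip (u t) (v t)) has_vector_derivative (ip (u t) v' + ip u' (v t))) (at t within S)"
proof -
  note a = fst_deriv[OF assms(1)] snd_deriv[OF assms(1)] fst_deriv[OF assms(2)] snd_deriv[OF assms(2)]
  show ?thesis unfolding ip_def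
    by (rule derivative_eq_intros a refl)+ (simp add: algebra_simps)
qed

lemma ip_cont: "continuous_on S u \<Longrightarrow> continuous_on S v \<Longrightarrow> continuous_on S (\<lambda>t. ip (u t) (v t))"
  unfolding ip_def by (intro continuous_intros continuous_on_fst continuous_on_snd)

lemma ip_neg: "ip (- u) (- v) = ip u v" unfolding ip_def by simp

lemma ip_pot_sym: "ip (pot \<alpha> \<beta> e t u) v = ip u (pot \<alpha> \<beta> e t v)"
  unfolding ip_def pot_def Let_def by (simp add: algebra_simps)

lemma ip_lin_left: "ip (- a - b + c) v = - ip a v - ip b v + ip c v" unfolding ip_def by (simp add: algebra_simps)
lemma ip_lin_right: "ip v (- a - b + c) = - ip v a - ip v b + ip v c" unfolding ip_def by (simp add: algebra_simps)
lemma ip_scale_left: "ip (r *\<^sub>R a) v = of_real r * ip a v" unfolding ip_def by (simp add: scaleR_conv_of_real algebra_simps)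
lemma ip_scale_right: "ip v (r *\<^sub>R a) = of_real r * ip v a" unfolding ip_def by (simp add: scaleR_conv_of_real algebra_simps)

lemma int_cont: fixes f :: "real \<Rightarrow> 'a::banach"
  assumes "continuous_on {a..b} f" shows "(f has_integral integral {a..b} f) {a..b}"
  by (rule integrable_integral, rule integrable_continuous_real, rule assms)

lemma sym_eig:
  assumes dy: "eigd \<alpha> \<beta> e lam y y' y''" and dz: "eigd \<alpha> \<beta> e mu z z' z''" and e: "0 \<le> e" "e < 1"
  shows "of_real lam * integral {0..2*pi} (\<lambda>t. ip (y t) (z t)) = of_real mu * integral {0..2*pi} (\<lambda>t. ip (y t) (z t))"
proof -
  note cy = eigd_cont[OF dy e] and cz = eigd_cont[OF dz e]
  have yd: "\<And>t. t \<in> {0..2*pi} \<Longrightarrow> (y has_vector_derivative y' t) (at t within {0..2*pi})"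
   and yd': "\<And>t. t \<in> {0..2*pi} \<Longrightarrow> (y' has_vector_derivative y'' t) (at t within {0..2*pi})"
   and yb: "y (2*pi) = - y 0" "y' (2*pi) = - y' 0"
   and ye: "\<And>t. t \<in> {0..2*pi} \<Longrightarrow> - y'' t - y t + pot \<alpha> \<beta> e t (y t) = lam *\<^sub>R y t"
    using dy unfolding eigd_def by auto
  have zd: "\<And>t. t \<in> {0..2*pi} \<Longrightarrow> (z has_vector_derivative z' t) (at t within {0..2*pi})"
   and zd': "\<And>t. t \<in> {0..2*pi} \<Longrightarrow> (z' has_vector_derivative z'' t) (at t within {0..2*pi})"
   and zb: "z (2*pi) = - z 0" "z' (2*pi) = - z' 0"
   and ze: "\<And>t. t \<in> {0..2*pi} \<Longrightarrow> - z'' t - z t + pot \<alpha> \<beta> e t (z t) = mu *\<^sub>R z t"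
    using dz unfolding eigd_def by auto
  define G where "G = integral {0..2*pi} (\<lambda>t. ip (y t) (z t))"
  define A1 where "A1 = integral {0..2*pi} (\<lambda>t. ip (y'' t) (z t))"
  define A2 where "A2 = integral {0..2*pi} (\<lambda>t. ip (y' t) (z' t))"
  define A3 where "A3 = integral {0..2*pi} (\<lambda>t. ip (y t) (z'' t))"
  define P1 where "P1 = integral {0..2*pi} (\<lambda>t. ip (pot \<alpha> \<beta> e t (y t)) (z t))"
  have iG: "((\<lambda>t. ip (y t) (z t)) has_integral G) {0..2*pi}" unfolding G_def
    by (intro int_cont ip_cont cy cz)
  have i1: "((\<lambda>t. ip (y'' t) (z t)) has_integral A1) {0..2*pi}" unfolding A1_def
    by (intro int_cont ip_cont cy cz)
  have i2: "((\<lambda>t. ip (y' t) (z' t)) has_integral A2) {0..2*pi}" unfolding A2_def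
    by (intro int_cont ip_cont cy cz)
  have i3: "((\<lambda>t. ip (y t) (z'' t)) has_integral A3) {0..2*pi}" unfolding A3_def
    by (intro int_cont ip_cont cy cz)
  have iP1: "((\<lambda>t. ip (pot \<alpha> \<beta> e t (y t)) (z t)) has_integral P1) {0..2*pi}" unfolding P1_def
    by (intro int_cont ip_cont cy cz pot_cont[OF e])
  have iP2: "((\<lambda>t. ip (y t) (pot \<alpha> \<beta> e t (z t))) has_integral P1) {0..2*pi}"
    using iP1 by (simp add: ip_pot_sym)
  have f1: "((\<lambda>t. ip (y' t) (z' t) + ip (y'' t) (z t)) has_integral (ip (y' (2*pi)) (z (2*pi)) - ip (y' 0) (z 0))) {0..2*pi}"
    by (rule fundamental_theorem_of_calculus) (auto intro!: ip_deriv yd' zd)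
  have f2: "((\<lambda>t. ip (y t) (z'' t) + ip (y' t) (z' t)) has_integral (ip (y (2*pi)) (z' (2*pi)) - ip (y 0) (z' 0))) {0..2*pi}"
    by (rule fundamental_theorem_of_calculus) (auto intro!: ip_deriv yd zd')
  have e1: "A2 + A1 = 0" using has_integral_unique[OF f1 has_integral_add[OF i2 i1]] yb zb by (simp add: ip_neg)
  have e2: "A3 + A2 = 0" using has_integral_unique[OF f2 has_integral_add[OF i3 i2]] yb zb by (simp add: ip_neg)
  have L: "((\<lambda>t. ip (lam *\<^sub>R y t) (z t)) has_integral (of_real lam * G)) {0..2*pi}"
    using has_integral_mult_right[OF iG, of "of_real lam"] by (simp add: ip_scale_left)
  have L2: "((\<lambda>t. ip (lam *\<^sub>R y t) (z t)) has_integral (- A1 - G + P1)) {0..2*pi}"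
  proof -
    have "((\<lambda>t. - ip (y'' t) (z t) - ip (y t) (z t) + ip (pot \<alpha> \<beta> e t (y t)) (z t)) has_integral (- A1 - G + P1)) {0..2*pi}"
      by (intro has_integral_add has_integral_diff has_integral_neg i1 iG iP1)
    then show ?thesis
      by (rule has_integral_eq[rotated]) (simp add: ye[symmetric] ip_lin_left)
  qed
  have M: "((\<lambda>t. ip (y t) (mu *\<^sub>R z t)) has_integral (of_real mu * G)) {0..2*pi}"
    using has_integral_mult_right[OF iG, of "of_real mu"] by (simp add: ip_scale_right)
  have M2: "((\<lambda>t. ip (y t) (mu *\<^sub>R z t)) has_integral (- A3 - G + P1)) {0..2*pi}"
  proof -
    have "((\<lambda>t. - ip (y t) (z'' t) - ip (y t) (z t) + ip (y t) (pot \<alpha> \<beta> e t (z t))) has_integral (- A3 - G + P1)) {0..2*pi}"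
      by (intro has_integral_add has_integral_diff has_integral_neg i3 iG iP2)
    then show ?thesis
      by (rule has_integral_eq[rotated]) (simp add: ze[symmetric] ip_lin_right)
  qed
  have "of_real lam * G = - A1 - G + P1" using has_integral_unique[OF L L2] .
  moreover have "of_real mu * G = - A3 - G + P1" using has_integral_unique[OF M M2] .
  moreover have "A1 = A3" using e1 e2 by (metis add.commute add_right_cancel)
  ultimately show ?thesis unfolding G_def by simp
qed




lemma lin3:
  fixes a b :: "nat \<Rightarrow> complex"
  shows "\<exists>c. (\<exists>i<3. c i \<noteq> 0) \<and> (\<forall>i. 3 \<le> i \<longrightarrow> c i = 0) \<and>
             (\<Sum>i<3. c i * a i) = 0 \<and> (\<Sum>i<3. c i * b i) = 0"
proof -
  define mk where "mk x y z = (\<lambda>i::nat. if i = 0 then x else if i = 1 then y else if i = 2 then z else (0::complex))" for x y z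
  have s3: "\<And>f::nat \<Rightarrow> complex. (\<Sum>i<3. f i) = f 0 + f 1 + f 2"
    by (simp add: eval_nat_numeral)
  have mk: "\<And>x y z. (\<exists>i<3. mk x y z i \<noteq> 0) \<longleftrightarrow> (x \<noteq> 0 \<or> y \<noteq> 0 \<or> z \<noteq> 0)"
    unfolding mk_def by (auto simp: eval_nat_numeral less_Suc_eq)
  have mk3: "\<And>x y z. \<forall>i. 3 \<le> i \<longrightarrow> mk x y z i = 0" unfolding mk_def by auto
  have mks: "\<And>x y z f. (\<Sum>i<3. mk x y z i * f i) = x * f 0 + y * f 1 + z * f 2"
    unfolding s3 mk_def by simp
  define x where "x = a 1 * b 2 - a 2 * b 1"
  define y where "y = a 2 * b 0 - a 0 * b 2"
  define z where "z = a 0 * b 1 - a 1 * b 0"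
  show ?thesis
  proof (cases "x \<noteq> 0 \<or> y \<noteq> 0 \<or> z \<noteq> 0")
    case True
    have "(\<Sum>i<3. mk x y z i * a i) = 0" unfolding mks x_def y_def z_def by (simp add: algebra_simps)
    moreover have "(\<Sum>i<3. mk x y z i * b i) = 0" unfolding mks x_def y_def z_def by (simp add: algebra_simps)
    moreover have "\<exists>i<3. mk x y z i \<noteq> 0" using True mk by simp
    ultimately show ?thesis
      by (intro exI[of _ "mk x y z"] conjI) (auto simp: mk3)
  next
    case F: False
    show ?thesis
    proof (cases "a 0 \<noteq> 0 \<or> a 1 \<noteq> 0")
      case True
      have "(\<Sum>i<3. mk (a 1) (- a 0) 0 i * a i) = 0" unfolding mks by (simp add: algebra_simps)
      moreover have "(\<Sum>i<3. mk (a 1) (- a 0) 0 i * b i) = 0" unfolding mks using F unfolding z_def by (simp add: algebra_simps)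
      moreover have "\<exists>i<3. mk (a 1) (- a 0) 0 i \<noteq> 0" using True mk by simp
      ultimately show ?thesis
        by (intro exI[of _ "mk (a 1) (- a 0) 0"] conjI) (auto simp: mk3)
    next
      case F2: False
      show ?thesis
      proof (cases "b 0 \<noteq> 0 \<or> b 1 \<noteq> 0")
        case True
        have "(\<Sum>i<3. mk (b 1) (- b 0) 0 i * a i) = 0" unfolding mks using F2 by simp
        moreover have "(\<Sum>i<3. mk (b 1) (- b 0) 0 i * b i) = 0" unfolding mks by (simp add: algebra_simps)
        moreover have "\<exists>i<3. mk (b 1) (- b 0) 0 i \<noteq> 0" using True mk by simp
        ultimately show ?thesis
          by (intro exI[of _ "mk (b 1) (- b 0) 0"] conjI) (auto simp: mk3)
      next
        case False
        have "(\<Sum>i<3. mk 1 0 0 i * a i) = 0" unfolding mks using F2 by simp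
        moreover have "(\<Sum>i<3. mk 1 0 0 i * b i) = 0" unfolding mks using False by simp
        moreover have "\<exists>i<3. mk 1 0 0 i \<noteq> (0::complex)" using mk[of 1 0 0] by simp
        ultimately show ?thesis
          by (intro exI[of _ "mk 1 0 0"] conjI) (auto simp: mk3)
      qed
    qed
  qed
qed

lemma ip_sum:
  "ip (\<Sum>i\<in>I. a i * fst (u i), \<Sum>i\<in>I. a i * snd (u i)) (\<Sum>j\<in>J. b j * fst (v j), \<Sum>j\<in>J. b j * snd (v j))
     = (\<Sum>i\<in>I. \<Sum>j\<in>J. a i * cnj (b j) * ip (u i) (v j))"
  by (simp add: ip_def cnj_sum sum_product sum.distrib[symmetric] algebra_simps)

definition K11 where "K11 \<alpha> \<beta> e t = (let a = 1 + \<alpha> + 3 * \<beta>; b = 1 + \<alpha> - 3 * \<beta>; c = cos t; s = sin t;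
          k = 1 / (1 + e * c) in complex_of_real (k * (a * c^2 + b * s^2)))"
definition K12 where "K12 \<alpha> \<beta> e t = (let a = 1 + \<alpha> + 3 * \<beta>; b = 1 + \<alpha> - 3 * \<beta>; c = cos t; s = sin t;
          k = 1 / (1 + e * c) in complex_of_real (k * (a - b) * c * s))"
definition K22 where "K22 \<alpha> \<beta> e t = (let a = 1 + \<alpha> + 3 * \<beta>; b = 1 + \<alpha> - 3 * \<beta>; c = cos t; s = sin t;
          k = 1 / (1 + e * c) in complex_of_real (k * (a * s^2 + b * c^2)))"

lemma pot_K: "pot \<alpha> \<beta> e t v = (K11 \<alpha> \<beta> e t * fst v + K12 \<alpha> \<beta> e t * snd v, K12 \<alpha> \<beta> e t * fst v + K22 \<alpha> \<beta> e t * snd v)"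
  unfolding pot_def K11_def K12_def K22_def Let_def by simp

lemma Ew_sum:
  "Ew aa bt e t (\<Sum>i\<in>I. c i * fst (y i)) (\<Sum>i\<in>I. c i * snd (y i)) (\<Sum>i\<in>I. c i * fst (d i)) (\<Sum>i\<in>I. c i * snd (d i))
   = (\<Sum>i\<in>I. c i * fst (Ew aa bt e t (fst (y i)) (snd (y i)) (fst (d i)) (snd (d i))),
      \<Sum>i\<in>I. c i * snd (Ew aa bt e t (fst (y i)) (snd (y i)) (fst (d i)) (snd (d i))))"
  unfolding Ew_def pot_K
  by (simp add: sum_distrib_left sum_distrib_right sum.distrib sum_subtractf sum_negf algebra_simps)

lemma Ew_vec: "Ew aa bt e t (fst v) (snd v) (fst d) (snd d) = - d - v + pot ((3*aa + bt + 1)/2) ((aa + bt + 1)/2) e t v"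
  by (simp add: Ew_def prod_eq_iff)

lemma Re_ip_self: "Re (ip v v) \<ge> 0"
  by (simp add: ip_def)

lemma cindep_zero:
  assumes ci: "cindep n ys" and i: "i < n" and z: "\<And>t. ys i t = 0"
  shows False
proof -
  define c where "c = (\<lambda>j. if j = i then 1 else (0::complex))"
  have sd: "(\<Sum>j<n. c j * f j) = f i" for f :: "nat \<Rightarrow> complex"
  proof -
    have "(\<Sum>j<n. c j * f j) = (\<Sum>j<n. if j = i then f j else 0)" by (rule sum.cong) (auto simp: c_def)
    also have "\<dots> = f i" using i by simp
    finally show ?thesis .
  qed
  have "\<forall>t. (\<Sum>j<n. c j * fst (ys j t)) = 0 \<and> (\<Sum>j<n. c j * snd (ys j t)) = 0"
    using sd z by simp
  then have "c i = 0" using ci i unfolding cindep_def by blast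
  then show False unfolding c_def by simp
qed




lemma part2_zero:
  fixes aa bt e lam :: real
  assumes e: "0 \<le> e" "e < 1" and big: "aa > 1/4 + 5/4*e" and bt: "-1 < bt" "bt \<le> 0" and lam: "lam \<le> 0"
  and eig: "is_eigfun ((3*aa + bt + 1)/2) ((aa + bt + 1)/2) e lam y"
  shows "y t = 0"
proof -
  from eig obtain y' y'' where out: "\<forall>t. t \<notin> {0..2*pi} \<longrightarrow> y t = 0"
    and d: "eigd ((3*aa + bt + 1)/2) ((aa + bt + 1)/2) e lam y y' y''"
    using is_eigfun_eigd by blast
  have yd: "\<And>t. t \<in> {0..2*pi} \<Longrightarrow> (y has_vector_derivative y' t) (at t within {0..2*pi})"
   and yd': "\<And>t. t \<in> {0..2*pi} \<Longrightarrow> (y' has_vector_derivative y'' t) (at t within {0..2*pi})"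
   and yb: "y (2*pi) = - y 0" "y' (2*pi) = - y' 0"
   and ye: "\<And>t. t \<in> {0..2*pi} \<Longrightarrow> - y'' t - y t + pot ((3*aa + bt + 1)/2) ((aa + bt + 1)/2) e t (y t) = lam *\<^sub>R y t"
    using d unfolding eigd_def by auto
  note cy = eigd_cont[OF d e]
  have aa0: "0 \<le> aa" using big e by linarith
  interpret W: cw "\<lambda>t. fst (y t)" "\<lambda>t. snd (y t)" "\<lambda>t. fst (y' t)" "\<lambda>t. snd (y' t)" "\<lambda>t. fst (y'' t)" "\<lambda>t. snd (y'' t)" aa bt e
    by unfold_locales (use aa0 bt e yb in \<open>auto intro!: fst_deriv snd_deriv yd yd' continuous_on_fst continuous_on_snd cy\<close>)
  define g where "g t = lam * Re (ip (y t) (y t))" for t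
  have gc: "continuous_on {0..2*pi} g" unfolding g_def
    by (intro continuous_intros ip_cont cy)
  have gi: "(g has_integral integral {0..2*pi} g) {0..2*pi}" by (rule int_cont[OF gc])
  have feq: "g t = Re (ip (Ew aa bt e t (fst (y t)) (snd (y t)) (fst (y'' t)) (snd (y'' t))) (fst (y t), snd (y t)))"
    if t: "t \<in> {0..2*pi}" for t
    using ye[OF t] unfolding Ew_vec g_def by (simp add: ip_scale_left)
  have J: "((\<lambda>t. Re (ip (Ew aa bt e t (fst (y t)) (snd (y t)) (fst (y'' t)) (snd (y'' t))) (fst (y t), snd (y t))))
             has_integral integral {0..2*pi} g) {0..2*pi}"
    by (rule has_integral_eq[OF feq gi])
  have le: "integral {0..2*pi} g \<le> 0"
  proof -
    have "\<And>t. g t \<le> 0" unfolding g_def using lam Re_ip_self by (simp add: mult_nonpos_nonneg)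
    then show ?thesis using has_integral_le[OF gi has_integral_0] by auto
  qed
  from W.redB[OF big J] le have "\<forall>t\<in>{0..2*pi}. fst (y t) = 0 \<and> snd (y t) = 0" by auto
  then show "y t = 0" using out by (cases "t \<in> {0..2*pi}") (auto simp: prod_eq_iff)
qed

lemma sum_extend3:
  fixes c :: "nat \<Rightarrow> complex"
  assumes n: "3 \<le> n" and c3: "\<forall>i. 3 \<le> i \<longrightarrow> c i = 0"
  shows "(\<Sum>i<n. c i * f i) = (\<Sum>i<3. c i * f i)"
  by (rule sum.mono_neutral_right) (use n c3 in auto)

lemma main3:
  fixes aa bt e :: real and L :: "nat \<Rightarrow> real" and ys D DD :: "nat \<Rightarrow> real \<Rightarrow> complex \<times> complex"
    and c :: "nat \<Rightarrow> complex"
  assumes e: "0 \<le> e" "e < 1" and aa0: "0 \<le> aa" and bt: "-1 < bt" "bt \<le> 0"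
  and eg: "\<And>i. i < 3 \<Longrightarrow> L i \<le> 0 \<and> eigd ((3*aa + bt + 1)/2) ((aa + bt + 1)/2) e (L i) (ys i) (D i) (DD i)"
  and out: "\<And>i t. i < 3 \<Longrightarrow> t \<notin> {0..2*pi} \<Longrightarrow> ys i t = 0"
  and cnz: "\<exists>i<3. c i \<noteq> 0" and c3: "\<forall>i. 3 \<le> i \<longrightarrow> c i = 0"
  and con0: "(\<Sum>i<3. c i * fst (ys i 0)) = 0" and conpi: "(\<Sum>i<3. c i * fst (ys i pi)) = 0"
  and ci: "cindep n ys" and n: "3 \<le> n"
  shows False
proof -
  define \<alpha> where "\<alpha> = (3*aa + bt + 1)/2"
  define \<beta> where "\<beta> = (aa + bt + 1)/2"
  have d: "\<And>i. i < 3 \<Longrightarrow> eigd \<alpha> \<beta> e (L i) (ys i) (D i) (DD i)" using eg unfolding \<alpha>_def \<beta>_def by blast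
  have Lnp: "\<And>i. i < 3 \<Longrightarrow> L i \<le> 0" using eg by blast
  have yd: "\<And>i t. i < 3 \<Longrightarrow> t \<in> {0..2*pi} \<Longrightarrow> (ys i has_vector_derivative D i t) (at t within {0..2*pi})"
   and yd': "\<And>i t. i < 3 \<Longrightarrow> t \<in> {0..2*pi} \<Longrightarrow> (D i has_vector_derivative DD i t) (at t within {0..2*pi})"
   and yb: "\<And>i. i < 3 \<Longrightarrow> ys i (2*pi) = - ys i 0" "\<And>i. i < 3 \<Longrightarrow> D i (2*pi) = - D i 0"
   and ye: "\<And>i t. i < 3 \<Longrightarrow> t \<in> {0..2*pi} \<Longrightarrow> - DD i t - ys i t + pot \<alpha> \<beta> e t (ys i t) = L i *\<^sub>R ys i t"
    using d unfolding eigd_def by auto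
  have cy: "\<And>i. i < 3 \<Longrightarrow> continuous_on {0..2*pi} (ys i)"
   and cdd: "\<And>i. i < 3 \<Longrightarrow> continuous_on {0..2*pi} (DD i)"
    using eigd_cont[OF d e] by auto
  define w1 where "w1 t = (\<Sum>i<3. c i * fst (ys i t))" for t
  define w2 where "w2 t = (\<Sum>i<3. c i * snd (ys i t))" for t
  define w1' where "w1' t = (\<Sum>i<3. c i * fst (D i t))" for t
  define w2' where "w2' t = (\<Sum>i<3. c i * snd (D i t))" for t
  define w1'' where "w1'' t = (\<Sum>i<3. c i * fst (DD i t))" for t
  define w2'' where "w2'' t = (\<Sum>i<3. c i * snd (DD i t))" for t
  interpret W: cw w1 w2 w1' w2' w1'' w2'' aa bt e
  proof unfold_locales
    show "0 \<le> aa" "-1 < bt" "bt \<le> 0" "0 \<le> e" "e < 1" using aa0 bt e by auto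
    show "\<And>t. t \<in> {0..2*pi} \<Longrightarrow> (w1 has_vector_derivative w1' t) (at t within {0..2*pi})"
      unfolding w1_def[abs_def] w1'_def
      by (intro has_vector_derivative_sum has_vector_derivative_mult_right fst_deriv yd) auto
    show "\<And>t. t \<in> {0..2*pi} \<Longrightarrow> (w2 has_vector_derivative w2' t) (at t within {0..2*pi})"
      unfolding w2_def[abs_def] w2'_def
      by (intro has_vector_derivative_sum has_vector_derivative_mult_right snd_deriv yd) auto
    show "\<And>t. t \<in> {0..2*pi} \<Longrightarrow> (w1' has_vector_derivative w1'' t) (at t within {0..2*pi})"
      unfolding w1'_def[abs_def] w1''_def
      by (intro has_vector_derivative_sum has_vector_derivative_mult_right fst_deriv yd') auto
    show "\<And>t. t \<in> {0..2*pi} \<Longrightarrow> (w2' has_vector_derivative w2'' t) (at t within {0..2*pi})"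
      unfolding w2'_def[abs_def] w2''_def
      by (intro has_vector_derivative_sum has_vector_derivative_mult_right snd_deriv yd') auto
    show "continuous_on {0..2*pi} w1''" unfolding w1''_def[abs_def]
      by (intro continuous_on_sum continuous_intros continuous_on_fst cdd) auto
    show "continuous_on {0..2*pi} w2''" unfolding w2''_def[abs_def]
      by (intro continuous_on_sum continuous_intros continuous_on_snd cdd) auto
    show "w1 (2*pi) = - w1 0" "w2 (2*pi) = - w2 0" "w1' (2*pi) = - w1' 0" "w2' (2*pi) = - w2' 0"
      unfolding w1_def w2_def w1'_def w2'_def by (simp_all add: yb sum_negf)
  qed
  define G where "G i j = integral {0..2*pi} (\<lambda>t. ip (ys i t) (ys j t))" for i j
  have Gi: "\<And>i j. i < 3 \<Longrightarrow> j < 3 \<Longrightarrow> ((\<lambda>t. ip (ys i t) (ys j t)) has_integral G i j) {0..2*pi}"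
    unfolding G_def by (intro int_cont ip_cont cy)
  define s where "s i = sqrt (- L i)" for i
  have sym: "\<And>i j. i < 3 \<Longrightarrow> j < 3 \<Longrightarrow> of_real (L i) * G i j = - (of_real (s i) * of_real (s j)) * G i j"
  proof -
    fix i j :: nat assume i: "i < 3" and j: "j < 3"
    have sy: "of_real (L i) * G i j = of_real (L j) * G i j"
      unfolding G_def by (rule sym_eig[OF d[OF i] d[OF j] e])
    show "of_real (L i) * G i j = - (of_real (s i) * of_real (s j)) * G i j"
    proof (cases "G i j = 0")
      case True then show ?thesis by simp
    next
      case False
      then have "L i = L j" using sy by simp
      then have "s i * s j = - L i" unfolding s_def using Lnp[OF i]
        by (simp add: real_sqrt_mult[symmetric])
      then have "of_real (s i) * of_real (s j) = (of_real (- L i) :: complex)" by (metis of_real_mult)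
      then show ?thesis by simp
    qed
  qed
  define a where "a i = c i * of_real (s i)" for i
  define T where "T = (\<Sum>i<3. \<Sum>j<3. (c i * of_real (L i)) * cnj (c j) * G i j)"
  have T2: "T = - (\<Sum>i<3. \<Sum>j<3. a i * cnj (a j) * G i j)"
  proof -
    have "T = (\<Sum>i<3. \<Sum>j<3. - (a i * cnj (a j) * G i j))"
      unfolding T_def
    proof (intro sum.cong refl)
      fix i j :: nat assume i: "i \<in> {..<3}" and j: "j \<in> {..<3}"
      have "(c i * of_real (L i)) * cnj (c j) * G i j = c i * cnj (c j) * (of_real (L i) * G i j)" by simp
      also have "\<dots> = c i * cnj (c j) * (- (of_real (s i) * of_real (s j)) * G i j)" using sym i j by simp
      also have "\<dots> = - (a i * cnj (a j) * G i j)" unfolding a_def by simp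
      finally show "(c i * of_real (L i)) * cnj (c j) * G i j = - (a i * cnj (a j) * G i j)" .
    qed
    then show ?thesis by (simp add: sum_negf)
  qed
  define v where "v t = (\<Sum>i<3. a i * fst (ys i t), \<Sum>i<3. a i * snd (ys i t))" for t
  have Hi: "((\<lambda>t. ip (v t) (v t)) has_integral (\<Sum>i<3. \<Sum>j<3. a i * cnj (a j) * G i j)) {0..2*pi}"
  proof -
    have "((\<lambda>t. \<Sum>i<3. \<Sum>j<3. a i * cnj (a j) * ip (ys i t) (ys j t)) has_integral (\<Sum>i<3. \<Sum>j<3. a i * cnj (a j) * G i j)) {0..2*pi}"
      by (intro has_integral_sum has_integral_mult_right Gi) auto
    then show ?thesis unfolding v_def ip_sum .
  qed
  have ReH: "Re (\<Sum>i<3. \<Sum>j<3. a i * cnj (a j) * G i j) \<ge> 0"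
    using has_integral_nonneg[OF has_integral_Re[OF Hi]] Re_ip_self by blast
  have Fi: "((\<lambda>t. \<Sum>i<3. \<Sum>j<3. (c i * of_real (L i)) * cnj (c j) * ip (ys i t) (ys j t)) has_integral T) {0..2*pi}"
    unfolding T_def by (intro has_integral_sum has_integral_mult_right Gi) auto
  have Feq: "(\<Sum>i<3. \<Sum>j<3. (c i * of_real (L i)) * cnj (c j) * ip (ys i t) (ys j t))
      = ip (Ew aa bt e t (w1 t) (w2 t) (w1'' t) (w2'' t)) (w1 t, w2 t)" if t: "t \<in> {0..2*pi}" for t
  proof -
    have "Ew aa bt e t (w1 t) (w2 t) (w1'' t) (w2'' t) =
      (\<Sum>i<3. c i * fst (Ew aa bt e t (fst (ys i t)) (snd (ys i t)) (fst (DD i t)) (snd (DD i t))),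
       \<Sum>i<3. c i * snd (Ew aa bt e t (fst (ys i t)) (snd (ys i t)) (fst (DD i t)) (snd (DD i t))))"
      unfolding w1_def w2_def w1''_def w2''_def by (rule Ew_sum)
    also have "\<dots> = (\<Sum>i<3. (c i * of_real (L i)) * fst (ys i t), \<Sum>i<3. (c i * of_real (L i)) * snd (ys i t))"
    proof -
      have "\<And>i::nat. i \<in> {..<3} \<Longrightarrow> Ew aa bt e t (fst (ys i t)) (snd (ys i t)) (fst (DD i t)) (snd (DD i t)) = L i *\<^sub>R ys i t"
        using ye t unfolding Ew_vec \<alpha>_def \<beta>_def by auto
      then show ?thesis by (auto intro!: sum.cong simp: scaleR_conv_of_real)
    qed
    finally have E: "Ew aa bt e t (w1 t) (w2 t) (w1'' t) (w2'' t) = (\<Sum>i<3. (c i * of_real (L i)) * fst (ys i t), \<Sum>i<3. (c i * of_real (L i)) * snd (ys i t))" .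
    show ?thesis unfolding E unfolding w1_def w2_def ip_sum by simp
  qed
  have J: "((\<lambda>t. Re (ip (Ew aa bt e t (w1 t) (w2 t) (w1'' t) (w2'' t)) (w1 t, w2 t))) has_integral Re T) {0..2*pi}"
    using has_integral_Re[OF has_integral_eq[OF Feq Fi]] .
  have ReT: "Re T \<le> 0" using T2 ReH by simp
  from W.redA[OF _ _ J] con0 conpi ReT have wz: "\<forall>t\<in>{0..2*pi}. w1 t = 0 \<and> w2 t = 0"
    unfolding w1_def by auto
  have "\<forall>t. (\<Sum>i<n. c i * fst (ys i t)) = 0 \<and> (\<Sum>i<n. c i * snd (ys i t)) = 0"
  proof
    fix t
    show "(\<Sum>i<n. c i * fst (ys i t)) = 0 \<and> (\<Sum>i<n. c i * snd (ys i t)) = 0"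
      unfolding sum_extend3[OF n c3]
    proof (cases "t \<in> {0..2*pi}")
      case True then show "(\<Sum>i<3. c i * fst (ys i t)) = 0 \<and> (\<Sum>i<3. c i * snd (ys i t)) = 0"
        using wz unfolding w1_def w2_def by auto
    next
      case False then show "(\<Sum>i<3. c i * fst (ys i t)) = 0 \<and> (\<Sum>i<3. c i * snd (ys i t)) = 0"
        using out by simp
    qed
  qed
  then have "\<forall>i<n. c i = 0" using ci unfolding cindep_def by blast
  then show False using cnz n by auto
qed




lemma part1_n:
  fixes aa bt e :: real and ys :: "nat \<Rightarrow> real \<Rightarrow> complex \<times> complex"
  assumes e: "0 \<le> e" "e < 1" and aa0: "0 \<le> aa" and bt: "-1 < bt" "bt \<le> 0"
  and n: "3 \<le> n"
  and eig: "\<forall>i<n. \<exists>lam. lam \<le> 0 \<and> is_eigfun ((3*aa + bt + 1)/2) ((aa + bt + 1)/2) e lam (ys i)"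
  and ci: "cindep n ys"
  shows False
proof -
  have "\<forall>i. \<exists>p. i < 3 \<longrightarrow> fst p \<le> 0 \<and> eigd ((3*aa + bt + 1)/2) ((aa + bt + 1)/2) e (fst p) (ys i) (fst (snd p)) (snd (snd p))
            \<and> (\<forall>t. t \<notin> {0..2*pi} \<longrightarrow> ys i t = 0)"
  proof
    fix i
    show "\<exists>p. i < 3 \<longrightarrow> fst p \<le> 0 \<and> eigd ((3*aa + bt + 1)/2) ((aa + bt + 1)/2) e (fst p) (ys i) (fst (snd p)) (snd (snd p))
            \<and> (\<forall>t. t \<notin> {0..2*pi} \<longrightarrow> ys i t = 0)"
    proof (cases "i < 3")
      case True
      then have "i < n" using n by simp
      then obtain lam where "lam \<le> 0" "is_eigfun ((3*aa + bt + 1)/2) ((aa + bt + 1)/2) e lam (ys i)"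
        using eig by blast
      then obtain y' y'' where "lam \<le> 0" "eigd ((3*aa + bt + 1)/2) ((aa + bt + 1)/2) e lam (ys i) y' y''"
        "\<forall>t. t \<notin> {0..2*pi} \<longrightarrow> ys i t = 0"
        using is_eigfun_eigd by blast
      then show ?thesis by (intro exI[of _ "(lam, y', y'')"]) simp
    next
      case False then show ?thesis by simp
    qed
  qed
  then obtain P where P: "\<And>i. i < 3 \<Longrightarrow> fst (P i) \<le> 0 \<and> eigd ((3*aa + bt + 1)/2) ((aa + bt + 1)/2) e (fst (P i)) (ys i) (fst (snd (P i))) (snd (snd (P i)))
            \<and> (\<forall>t. t \<notin> {0..2*pi} \<longrightarrow> ys i t = 0)"
    by metis
  obtain c where c: "\<exists>i<3. c i \<noteq> 0" "\<forall>i. 3 \<le> i \<longrightarrow> c i = 0"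
    "(\<Sum>i<3. c i * fst (ys i 0)) = 0" "(\<Sum>i<3. c i * fst (ys i pi)) = 0"
    using lin3[of "\<lambda>i. fst (ys i 0)" "\<lambda>i. fst (ys i pi)"] by blast
  show False
    by (rule main3[of e aa bt "\<lambda>i. fst (P i)" ys "\<lambda>i. fst (snd (P i))" "\<lambda>i. snd (snd (P i))" c n])
       (use e aa0 bt P c ci n in auto)
qed

lemma Sup_enat_le:
  fixes S :: "enat set" and k :: nat
  assumes "\<And>n. enat n \<in> S \<Longrightarrow> n \<le> k" and "\<And>x. x \<in> S \<Longrightarrow> \<exists>n. x = enat n"
  shows "Sup S \<le> enat k"
  unfolding Sup_le_iff
proof
  fix x assume "x \<in> S"
  then obtain n where "x = enat n" "enat n \<in> S" using assms(2) by blast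
  then show "x \<le> enat k" using assms(1) by simp
qed

theorem proposition6p3:
  shows "(\<forall>a_t b_t e :: real. a_t \<ge> 0 \<and> -1 < b_t \<and> b_t \<le> 0 \<and> 0 \<le> e \<and> e < 1 \<longrightarrow>
            morse_index_t a_t b_t e \<le> 2 \<and> nullity_t a_t b_t e \<le> 2) \<and>
         (\<forall>a_t b_t e0 :: real. 0 \<le> e0 \<and> e0 < 1 \<and> a_t > 1/4 + 5/4 * e0 \<and> -1 < b_t \<and> b_t \<le> 0 \<longrightarrow>
            morse_index_t a_t b_t e0 = 0 \<and> nullity_t a_t b_t e0 = 0)"
proof (intro conjI allI impI)
  fix a_t b_t e :: real
  assume A: "a_t \<ge> 0 \<and> -1 < b_t \<and> b_t \<le> 0 \<and> 0 \<le> e \<and> e < 1"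
  have two: "(2::enat) = enat 2" by (simp add: numeral_eq_enat)
  show "morse_index_t a_t b_t e \<le> 2"
    unfolding morse_index_t_def morse_index_def two
  proof (rule Sup_enat_le)
    fix n assume "enat n \<in> {enat n |n. \<exists>ys. (\<forall>i<n. \<exists>lam<0. is_eigfun ((3*a_t + b_t + 1)/2) ((a_t + b_t + 1)/2) e lam (ys i)) \<and> cindep n ys}"
    then obtain ys where ys: "\<forall>i<n. \<exists>lam<0. is_eigfun ((3*a_t + b_t + 1)/2) ((a_t + b_t + 1)/2) e lam (ys i)" "cindep n ys"
      by auto
    show "n \<le> 2"
    proof (rule ccontr)
      assume "\<not> n \<le> 2"
      then have n: "3 \<le> n" by simp
      have "\<forall>i<n. \<exists>lam. lam \<le> 0 \<and> is_eigfun ((3*a_t + b_t + 1)/2) ((a_t + b_t + 1)/2) e lam (ys i)"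
        using ys(1) less_imp_le by blast
      then show False using part1_n[OF _ _ _ _ _ n _ ys(2)] A by auto
    qed
  qed auto
  show "nullity_t a_t b_t e \<le> 2"
    unfolding nullity_t_def nullity_def two
  proof (rule Sup_enat_le)
    fix n assume "enat n \<in> {enat n |n. \<exists>ys. (\<forall>i<n. is_eigfun ((3*a_t + b_t + 1)/2) ((a_t + b_t + 1)/2) e 0 (ys i)) \<and> cindep n ys}"
    then obtain ys where ys: "\<forall>i<n. is_eigfun ((3*a_t + b_t + 1)/2) ((a_t + b_t + 1)/2) e 0 (ys i)" "cindep n ys"
      by auto
    show "n \<le> 2"
    proof (rule ccontr)
      assume "\<not> n \<le> 2"
      then have n: "3 \<le> n" by simp
      have "\<forall>i<n. \<exists>lam. lam \<le> 0 \<and> is_eigfun ((3*a_t + b_t + 1)/2) ((a_t + b_t + 1)/2) e lam (ys i)"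
        using ys(1) by blast
      then show False using part1_n[OF _ _ _ _ _ n _ ys(2)] A by auto
    qed
  qed auto
next
  fix a_t b_t e0 :: real
  assume A: "0 \<le> e0 \<and> e0 < 1 \<and> a_t > 1/4 + 5/4 * e0 \<and> -1 < b_t \<and> b_t \<le> 0"
  have zero: "(0::enat) = enat 0" by (simp add: zero_enat_def)
  show "morse_index_t a_t b_t e0 = 0"
  proof -
    have "morse_index_t a_t b_t e0 \<le> enat 0"
      unfolding morse_index_t_def morse_index_def
    proof (rule Sup_enat_le)
      fix n assume "enat n \<in> {enat n |n. \<exists>ys. (\<forall>i<n. \<exists>lam<0. is_eigfun ((3*a_t + b_t + 1)/2) ((a_t + b_t + 1)/2) e0 lam (ys i)) \<and> cindep n ys}"
      then obtain ys where ys: "\<forall>i<n. \<exists>lam<0. is_eigfun ((3*a_t + b_t + 1)/2) ((a_t + b_t + 1)/2) e0 lam (ys i)" "cindep n ys"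
        by auto
      show "n \<le> 0"
      proof (rule ccontr)
        assume "\<not> n \<le> 0"
        then have n: "0 < n" by simp
        then obtain lam where "lam < 0" "is_eigfun ((3*a_t + b_t + 1)/2) ((a_t + b_t + 1)/2) e0 lam (ys 0)"
          using ys(1) by blast
        then have "\<And>t. ys 0 t = 0" using part2_zero A by (meson less_imp_le)
        then show False using cindep_zero[OF ys(2) n] by blast
      qed
    qed auto
    then show ?thesis by (simp add: zero[symmetric] ile0_eq)
  qed
  show "nullity_t a_t b_t e0 = 0"
  proof -
    have "nullity_t a_t b_t e0 \<le> enat 0"
      unfolding nullity_t_def nullity_def
    proof (rule Sup_enat_le)
      fix n assume "enat n \<in> {enat n |n. \<exists>ys. (\<forall>i<n. is_eigfun ((3*a_t + b_t + 1)/2) ((a_t + b_t + 1)/2) e0 0 (ys i)) \<and> cindep n ys}"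
      then obtain ys where ys: "\<forall>i<n. is_eigfun ((3*a_t + b_t + 1)/2) ((a_t + b_t + 1)/2) e0 0 (ys i)" "cindep n ys"
        by auto
      show "n \<le> 0"
      proof (rule ccontr)
        assume "\<not> n \<le> 0"
        then have n: "0 < n" by simp
        then have "is_eigfun ((3*a_t + b_t + 1)/2) ((a_t + b_t + 1)/2) e0 0 (ys 0)"
          using ys(1) by blast
        then have "\<And>t. ys 0 t = 0" using part2_zero A by (meson order_refl)
        then show False using cindep_zero[OF ys(2) n] by blast
      qed
    qed auto
    then show ?thesis by (simp add: zero[symmetric] ile0_eq)
  qed
qed


end
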